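(* Let $c_k:S^1\to\widehat{\mathbb{C}}$ ($k\in\mathbb{N}$) and $c:S^1\to\widehat{\mathbb{C}}$ be simple closed curves such that $c_k(S^1)\to c(S^1)$ in the Fell topology on closed subsets of $\widehat{\mathbb{C}}$. If the sequence $\{c_k\}$ has no collapsing finger, then the curves $c_k$ can be reparametrized (i.e. replaced by $c_k\circ\sigma_k$ for homeomorphisms $\sigma_k:S^1\to S^1$) so that $c_k\to c$ uniformly.
   Context: The Fell topology on the space of closed subsets of a space $S$ is generated by the sets $N(K,\mathcal U)=\{A : A\cap K=\varnothing,\ A\cap U\neq\varnothing \ \forall U\in\mathcal U\}$ with $K\subset S$ compact and $\mathcal U$ a finite family of open sets; for $S=\widehat{\mathbb{C}}$, $A_n\to A$ iff every point of $A$ is a limit of points $a_n\in A_n$ and every accumulation point of any sequence $a_n\in A_n$ lies in $A$. A sequence $\{c_k\}$ of simple closed curves has a collapsing finger if, after passing to a subsequence, there are $x_k,y_k,z_k,w_k\in S^1$ in cyclic order and points $x\neq y$ in $\widehat{\mathbb{C}}$ with $c_k(x_k)\to x$, $c_k(y_k)\to y$, $c_k(z_k)\to x$, $c_k(w_k)\to y$. *)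

theory Defs
  imports "HOL-Analysis.Analysis"
begin

definition circle1 :: "complex set" where
  "circle1 = sphere 0 1"

text \<open>The Riemann sphere, modelled (via stereographic projection) as the unit
  sphere in R^3, with the chordal metric = restriction of the Euclidean metric.\<close>
definition riemann_sphere :: "(real^3) set" where
  "riemann_sphere = sphere 0 1"

definition simple_closed_curve :: "(complex \<Rightarrow> real^3) \<Rightarrow> bool" where
  "simple_closed_curve c \<longleftrightarrow>
     continuous_on circle1 c \<and> inj_on c circle1 \<and> c ` circle1 \<subseteq> riemann_sphere"

definition fell_basic :: "'a topology \<Rightarrow> 'a set \<Rightarrow> 'a set set \<Rightarrow> 'a set set" where
  "fell_basic X K \<U> = {A. closedin X A \<and> A \<inter> K = {} \<and> (\<forall>U\<in>\<U>. A \<inter> U \<noteq> {})}"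

definition fell_topology :: "'a topology \<Rightarrow> 'a set topology" where
  "fell_topology X = topology_generated_by
     {fell_basic X K \<U> | K \<U>. compactin X K \<and> finite \<U> \<and> (\<forall>U\<in>\<U>. openin X U)}"

definition cyclic_order4 :: "complex \<Rightarrow> complex \<Rightarrow> complex \<Rightarrow> complex \<Rightarrow> bool" where
  "cyclic_order4 a b c d \<longleftrightarrow>
     (\<exists>t0 t1 t2 t3. t0 < t1 \<and> t1 < t2 \<and> t2 < t3 \<and> t3 < t0 + 2 * pi \<and>
        a = cis t0 \<and> b = cis t1 \<and> c = cis t2 \<and> d = cis t3)"

definition has_collapsing_finger :: "(nat \<Rightarrow> complex \<Rightarrow> real^3) \<Rightarrow> bool" where
  "has_collapsing_finger c \<longleftrightarrow>
     (\<exists>r::nat\<Rightarrow>nat. strict_mono r \<and>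
       (\<exists>xs ys zs ws :: nat \<Rightarrow> complex. \<exists>x y :: real^3.
          x \<in> riemann_sphere \<and> y \<in> riemann_sphere \<and> x \<noteq> y \<and>
          (\<forall>k. xs k \<in> circle1 \<and> ys k \<in> circle1 \<and> zs k \<in> circle1 \<and> ws k \<in> circle1 \<and>
               cyclic_order4 (xs k) (ys k) (zs k) (ws k)) \<and>
          ((\<lambda>k. c (r k) (xs k)) \<longlonglongrightarrow> x) \<and>
          ((\<lambda>k. c (r k) (ys k)) \<longlonglongrightarrow> y) \<and>
          ((\<lambda>k. c (r k) (zs k)) \<longlonglongrightarrow> x) \<and>
          ((\<lambda>k. c (r k) (ws k)) \<longlonglongrightarrow> y)))"

end

theory Submission
  imports Defs
begin

definition ee :: "real \<Rightarrow> complex" where "ee t = cis (2*pi*t)"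

lemma ee_in [simp]: "ee t \<in> circle1"
  by (simp add: ee_def circle1_def)

lemma norm_ee [simp]: "norm (ee t) = 1"
  by (simp add: ee_def)

lemma ee_add: "ee (s + t) = ee s * ee t"
  by (simp add: ee_def cis_mult distrib_left)

lemma ee_diff: "ee (s - t) = ee s / ee t"
  by (simp add: ee_def cis_divide right_diff_distrib)

lemma continuous_ee [continuous_intros]: "continuous_on S ee"
  unfolding ee_def cis_conv_exp by (intro continuous_intros)

lemma isCont_ee: "isCont ee t"
  unfolding ee_def cis_conv_exp by (intro continuous_intros)

lemma ee_nonzero [simp]: "ee t \<noteq> 0"
  using norm_ee[of t] by (metis norm_zero zero_neq_one)

lemma ee_eq_1_iff: "ee t = 1 \<longleftrightarrow> t \<in> \<int>"
proof -
  have "ee t = exp (complex_of_real (2*pi*t) * \<i>)" by (simp add: ee_def cis_conv_exp mult.commute)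
  hence "ee t = 1 \<longleftrightarrow> (\<exists>n::int. 2*pi*t = of_int (2*n) * pi)"
    by (simp add: exp_eq_1)
  also have "\<dots> \<longleftrightarrow> (\<exists>n::int. t = of_int n)"
    by (auto simp: field_simps)
  also have "\<dots> \<longleftrightarrow> t \<in> \<int>" by (auto elim: Ints_cases)
  finally show ?thesis .
qed

lemma ee_eq_iff: "ee s = ee t \<longleftrightarrow> s - t \<in> \<int>"
proof -
  have "ee t \<noteq> 0" by simp
  hence "ee s = ee t \<longleftrightarrow> ee (s - t) = 1" by (auto simp: ee_diff)
  thus ?thesis by (simp add: ee_eq_1_iff)
qed

lemma ee_int [simp]: "n \<in> \<int> \<Longrightarrow> ee (t + n) = ee t"
  by (simp add: ee_eq_iff)

lemma ee_plus1 [simp]: "ee (t + 1) = ee t"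
  by (simp add: ee_eq_iff)

lemma ee_surj:
  assumes "z \<in> circle1" shows "\<exists>t. 0 \<le> t \<and> t < 1 \<and> ee t = z"
proof -
  have nz: "norm z = 1" using assms by (simp add: circle1_def)
  hence z0: "z \<noteq> 0" by auto
  have "cis (Arg z) = z" using cis_Arg[OF z0] nz by (simp add: sgn_div_norm)
  have A: "- pi < Arg z" "Arg z \<le> pi" using Arg_bounded[of z] by auto
  show ?thesis
  proof (cases "Arg z \<ge> 0")
    case True
    show ?thesis
      by (rule exI[of _ "Arg z/(2*pi)"]) (use True A \<open>cis (Arg z) = z\<close> in \<open>auto simp: ee_def field_simps\<close>)
  next
    case False
    have "ee (Arg z/(2*pi) + 1) = cis (Arg z) * cis (2*pi)" unfolding cis_mult by (simp add: ee_def distrib_left)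
    hence "ee (Arg z/(2*pi) + 1) = z" using \<open>cis (Arg z) = z\<close> by simp
    thus ?thesis using False A
      by (intro exI[of _ "Arg z/(2*pi) + 1"]) (auto simp: field_simps)
  qed
qed

lemma ee_surj_from:
  assumes "z \<in> circle1" shows "\<exists>t. a \<le> t \<and> t < a + 1 \<and> ee t = z"
proof -
  obtain t0 where t0: "0 \<le> t0" "t0 < 1" "ee t0 = z" using ee_surj[OF assms] by blast
  define n where "n = \<lceil>a - t0\<rceil>"
  have "ee (t0 + of_int n) = z" using t0 by simp
  moreover have "a \<le> t0 + of_int n" "t0 + of_int n < a + 1" unfolding n_def
    by linarith+
  ultimately show ?thesis by blast
qed

lemma ee_image: "ee ` {a..a+1} = circle1"
  using ee_surj_from[of _ a] by force

lemma norm_cis_minus_1_le: "norm (cis x - 1) \<le> \<bar>x\<bar>"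
proof -
  have "(norm (cis x - 1))^2 = (cos x - 1)^2 + (sin x)^2"
    by (simp add: cmod_def)
  also have "\<dots> = 2 - 2 * cos x" by (simp add: power2_eq_square algebra_simps)
  also have "\<dots> = 4 * (sin (x/2))^2" using cos_double_sin[of "x/2"] by simp
  also have "\<dots> \<le> 4 * (x/2)^2"
    using abs_sin_x_le_abs_x[of "x/2"] abs_le_square_iff[of "sin (x/2)" "x/2"] by simp
  also have "\<dots> = x^2" by (simp add: power2_eq_square)
  finally show ?thesis by (simp add: abs_le_square_iff[symmetric] real_le_rsqrt)
qed

lemma norm_ee_minus_ee: "norm (ee s - ee t) \<le> 2*pi*\<bar>s - t\<bar>"
proof -
  have "norm (ee s - ee t) = norm (ee t * (ee (s - t) - 1))"
    by (simp add: ee_diff right_diff_distrib)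
  also have "\<dots> = norm (ee (s - t) - 1)" by (simp add: norm_mult)
  also have "\<dots> \<le> \<bar>2*pi*(s-t)\<bar>"
    unfolding ee_def by (rule norm_cis_minus_1_le) 
  finally show ?thesis by (simp add: abs_mult)
qed

lemma compact_circle1 [simp]: "compact circle1"
  by (simp add: circle1_def)

lemma compact_RS [simp]: "compact riemann_sphere"
  by (simp add: riemann_sphere_def)

lemma fell_basic_open:
  assumes "compact K" "K \<subseteq> riemann_sphere" "finite \<U>" "\<And>U. U \<in> \<U> \<Longrightarrow> open U"
  shows "openin (fell_topology (top_of_set riemann_sphere))
           (fell_basic (top_of_set riemann_sphere) K ((\<lambda>U. riemann_sphere \<inter> U) ` \<U>))"
  unfolding fell_topology_def
proof (rule topology_generated_by_Basis, intro CollectI exI conjI)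
  show "compactin (top_of_set riemann_sphere) K" using assms by (simp add: compactin_subtopology)
  show "finite ((\<lambda>U. riemann_sphere \<inter> U) ` \<U>)" using assms by simp
  show "\<forall>U\<in>(\<lambda>U. riemann_sphere \<inter> U) ` \<U>. openin (top_of_set riemann_sphere) U"
    using assms by (auto intro: openin_open_Int)
qed (rule refl)

locale setting =
  fixes cs :: "nat \<Rightarrow> complex \<Rightarrow> real^3" and c :: "complex \<Rightarrow> real^3"
  assumes curves: "\<And>k. simple_closed_curve (cs k)"
    and curve: "simple_closed_curve c"
    and fell: "limitin (fell_topology (top_of_set riemann_sphere))
           (\<lambda>k. cs k ` circle1) (c ` circle1) sequentially"
begin

abbreviation "J \<equiv> c ` circle1"

lemma cont_c: "continuous_on circle1 c" using curve by (simp add: simple_closed_curve_def)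
lemma inj_c: "inj_on c circle1" using curve by (simp add: simple_closed_curve_def)
lemma c_RS: "z \<in> circle1 \<Longrightarrow> c z \<in> riemann_sphere" using curve by (auto simp: simple_closed_curve_def)
lemma cont_cs: "continuous_on circle1 (cs k)" using curves by (simp add: simple_closed_curve_def)
lemma cs_RS: "z \<in> circle1 \<Longrightarrow> cs k z \<in> riemann_sphere" using curves by (auto simp: simple_closed_curve_def)
lemma compact_J: "compact J" by (intro compact_continuous_image cont_c) simp
lemma J_RS: "J \<subseteq> riemann_sphere" using c_RS by auto

lemma J_in_basic:
  assumes "J \<inter> K = {}" "\<And>U. U \<in> \<U> \<Longrightarrow> J \<inter> U \<noteq> {}"
  shows "J \<in> fell_basic (top_of_set riemann_sphere) K ((\<lambda>U. riemann_sphere \<inter> U) ` \<U>)"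
proof -
  have "closedin (top_of_set riemann_sphere) J"
    using compact_J J_RS by (metis closed_subset compact_imp_closed)
  moreover have "\<forall>U\<in>(\<lambda>U. riemann_sphere \<inter> U) ` \<U>. J \<inter> U \<noteq> {}"
  proof
    fix V assume "V \<in> (\<lambda>U. riemann_sphere \<inter> U) ` \<U>"
    then obtain U where "U \<in> \<U>" "V = riemann_sphere \<inter> U" by auto
    thus "J \<inter> V \<noteq> {}" using assms(2)[of U] J_RS by blast
  qed
  ultimately show ?thesis using assms unfolding fell_basic_def by auto
qed

lemma fell_eventually:
  assumes "compact K" "K \<subseteq> riemann_sphere" "finite \<U>" "\<And>U. U \<in> \<U> \<Longrightarrow> open U"
    "J \<inter> K = {}" "\<And>U. U \<in> \<U> \<Longrightarrow> J \<inter> U \<noteq> {}"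
  shows "eventually (\<lambda>k. cs k ` circle1 \<inter> K = {} \<and> (\<forall>U\<in>\<U>. cs k ` circle1 \<inter> U \<noteq> {})) sequentially"
proof -
  have "eventually (\<lambda>k. cs k ` circle1 \<in> fell_basic (top_of_set riemann_sphere) K ((\<lambda>U. riemann_sphere \<inter> U) ` \<U>)) sequentially"
    using fell fell_basic_open[OF assms(1-4)] J_in_basic[OF assms(5,6)]
    unfolding limitin_def by blast
  thus ?thesis
  proof (rule eventually_mono)
    fix k assume "cs k ` circle1 \<in> fell_basic (top_of_set riemann_sphere) K ((\<lambda>U. riemann_sphere \<inter> U) ` \<U>)"
    hence "cs k ` circle1 \<inter> K = {}" "\<forall>U\<in>\<U>. cs k ` circle1 \<inter> (riemann_sphere \<inter> U) \<noteq> {}"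
      unfolding fell_basic_def by auto
    thus "cs k ` circle1 \<inter> K = {} \<and> (\<forall>U\<in>\<U>. cs k ` circle1 \<inter> U \<noteq> {})" by blast
  qed
qed

lemma F1:
  assumes r: "strict_mono r" and p: "\<And>n. p n \<in> cs (r n) ` circle1" and lim: "p \<longlonglongrightarrow> x"
  shows "x \<in> J"
proof (rule ccontr)
  assume xJ: "x \<notin> J"
  have pRS: "p n \<in> riemann_sphere" for n using p[of n] cs_RS by force
  have xRS: "x \<in> riemann_sphere"
    by (rule closed_sequentially[OF _ _ lim]) (use pRS in \<open>auto simp: compact_imp_closed\<close>)
  have "open (- J)" using compact_J by (simp add: compact_imp_closed open_Compl)
  then obtain \<epsilon> where "\<epsilon> > 0" "ball x \<epsilon> \<subseteq> - J" using xJ by (meson ComplI open_contains_ball)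
  define K where "K = cball x (\<epsilon>/2) \<inter> riemann_sphere"
  have K: "compact K" "K \<subseteq> riemann_sphere" 
    by (auto simp: K_def compact_Int_closed compact_imp_closed)
  have "J \<inter> K = {}"
  proof -
    have "cball x (\<epsilon>/2) \<subseteq> ball x \<epsilon>" using \<open>\<epsilon>>0\<close> by (simp add: cball_subset_ball_iff)
    thus ?thesis using \<open>ball x \<epsilon> \<subseteq> - J\<close> unfolding K_def by blast
  qed
  note K = K this
  have ev1: "eventually (\<lambda>k. cs k ` circle1 \<inter> K = {}) sequentially"
    using fell_eventually[OF K(1,2), of "{}"] K(3) by simp
  have ev2: "eventually (\<lambda>n. cs (r n) ` circle1 \<inter> K = {}) sequentially"
    using eventually_compose_filterlim[OF ev1 filterlim_subseq[OF r]] by simp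
  have ev3: "eventually (\<lambda>n. dist (p n) x < \<epsilon>/2) sequentially"
  proof -
    have "\<epsilon>/2 > 0" using \<open>\<epsilon>>0\<close> by simp
    from lim have "\<forall>e>0. eventually (\<lambda>n. dist (p n) x < e) sequentially" unfolding tendsto_iff .
    from this[rule_format, OF \<open>\<epsilon>/2 > 0\<close>] show ?thesis .
  qed
  obtain N where N: "\<forall>n\<ge>N. cs (r n) ` circle1 \<inter> K = {} \<and> dist (p n) x < \<epsilon>/2"
    using eventually_conj[OF ev2 ev3] unfolding eventually_sequentially by blast
  define n where "n = N"
  have "cs (r n) ` circle1 \<inter> K = {}" "dist (p n) x < \<epsilon>/2" using N by (auto simp: n_def)
  moreover have "p n \<in> K" using \<open>dist (p n) x < \<epsilon>/2\<close> pRS by (auto simp: K_def dist_commute)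
  ultimately show False using p[of n] by blast
qed

lemma F2:
  assumes "\<eta> > 0"
  shows "eventually (\<lambda>k. \<forall>j\<in>J. \<exists>z\<in>circle1. dist (cs k z) j < \<eta>) sequentially"
proof -
  obtain T where T: "T \<subseteq> J" "finite T" "J \<subseteq> (\<Union>t\<in>T. ball t (\<eta>/2))"
    using compactE_image[OF compact_J, of J "\<lambda>t. ball t (\<eta>/2)"] \<open>\<eta>>0\<close> by force
  have "eventually (\<lambda>k. cs k ` circle1 \<inter> {} = {} \<and> (\<forall>U\<in>(\<lambda>t. ball t (\<eta>/2)) ` T. cs k ` circle1 \<inter> U \<noteq> {})) sequentially"
    by (rule fell_eventually) (use T \<open>\<eta>>0\<close> in auto)
  thus ?thesis
  proof (rule eventually_mono)
    fix k assume H: "cs k ` circle1 \<inter> {} = {} \<and> (\<forall>U\<in>(\<lambda>t. ball t (\<eta>/2)) ` T. cs k ` circle1 \<inter> U \<noteq> {})"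
    show "\<forall>j\<in>J. \<exists>z\<in>circle1. dist (cs k z) j < \<eta>"
    proof
      fix j assume "j \<in> J"
      then obtain t where t: "t \<in> T" "dist t j < \<eta>/2" using T(3) by auto
      have "cs k ` circle1 \<inter> ball t (\<eta>/2) \<noteq> {}" using H t(1) by blast
      then obtain z where z: "z \<in> circle1" "dist t (cs k z) < \<eta>/2" by auto
      have "dist (cs k z) j \<le> dist (cs k z) t + dist t j" by (rule dist_triangle)
      thus "\<exists>z\<in>circle1. dist (cs k z) j < \<eta>" using z t by (intro bexI[OF _ z(1)]) (simp add: dist_commute)
    qed
  qed
qed

lemma F3:
  assumes "\<eta> > 0"
  shows "eventually (\<lambda>k. \<forall>z\<in>circle1. \<exists>w\<in>circle1. dist (cs k z) (c w) < \<eta>) sequentially"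
proof -
  define K where "K = riemann_sphere \<inter> {x. \<eta> \<le> infdist x J}"
  have "closed {x. \<eta> \<le> infdist x J}"
    using continuous_closed_vimage[of "{\<eta>..}" "\<lambda>x. infdist x J"] continuous_infdist[OF continuous_ident, of _ UNIV J]
    by (auto simp: vimage_def)
  hence K: "compact K" "K \<subseteq> riemann_sphere" unfolding K_def by (auto intro: compact_Int_closed)
  have "J \<inter> K = {}" using \<open>\<eta>>0\<close> by (auto simp: K_def)
  have "eventually (\<lambda>k. cs k ` circle1 \<inter> K = {} \<and> (\<forall>U\<in>{}. cs k ` circle1 \<inter> U \<noteq> {})) sequentially"
    by (rule fell_eventually) (use K \<open>J \<inter> K = {}\<close> in auto)
  thus ?thesis
  proof (rule eventually_mono)
    fix k assume H: "cs k ` circle1 \<inter> K = {} \<and> (\<forall>U\<in>{}. cs k ` circle1 \<inter> U \<noteq> {})"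
    show "\<forall>z\<in>circle1. \<exists>w\<in>circle1. dist (cs k z) (c w) < \<eta>"
    proof
      fix z assume z: "z \<in> circle1"
      hence "infdist (cs k z) J < \<eta>" using H cs_RS[OF z] by (force simp: K_def)
      moreover have "J \<noteq> {}" by (simp add: circle1_def)
      ultimately obtain j where "j \<in> J" "dist (cs k z) j < \<eta>"
        using infdist_attains_inf[OF compact_imp_closed[OF compact_J], of "cs k z"] by (metis order_le_less_trans order_refl)
      thus "\<exists>w\<in>circle1. dist (cs k z) (c w) < \<eta>" by auto
    qed
  qed
qed

end

lemma subseq_choose:
  fixes P :: "nat \<Rightarrow> nat \<Rightarrow> bool"
  assumes "\<And>n N. \<exists>k\<ge>N. P n k"
  obtains r where "strict_mono r" "\<And>n. P n (r n)"
proof -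
  have "\<forall>n. \<exists>g. \<forall>N. g N \<ge> N \<and> P n (g N)"
  proof
    fix n
    have "\<forall>N. \<exists>k. k \<ge> N \<and> P n k" using assms by blast
    thus "\<exists>g. \<forall>N. g N \<ge> N \<and> P n (g N)" by (rule choice)
  qed
  from choice[OF this] obtain f where f0: "\<forall>n. \<forall>N. f n N \<ge> N \<and> P n (f n N)" by blast
  hence f: "\<And>n N. f n N \<ge> N \<and> P n (f n N)" by blast
  define r where "r = rec_nat (f 0 0) (\<lambda>n rn. f (Suc n) (Suc rn))"
  have r0: "r 0 = f 0 0" and rS: "r (Suc n) = f (Suc n) (Suc (r n))" for n by (simp_all add: r_def)
  have "r n < r (Suc n)" for n using f[where n="Suc n" and N="Suc (r n)"] rS[of n] by simp
  hence "strict_mono r" unfolding strict_mono_Suc_iff by blast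
  moreover have "P n (r n)" for n
  proof (cases n)
    case 0 thus ?thesis using f[where n=0 and N=0] r0 by simp
  next
    case (Suc m) thus ?thesis using f[where n="Suc m" and N="Suc (r m)"] rS[of m] by simp
  qed
  ultimately show ?thesis by (rule that)
qed

lemma subseq_eventually:
  fixes P :: "nat \<Rightarrow> nat \<Rightarrow> bool"
  assumes "\<And>n. eventually (P n) sequentially"
  obtains r where "strict_mono r" "\<And>n. P n (r n)"
proof -
  have *: "\<exists>k\<ge>N. P n k" for n N
  proof -
    obtain M where "\<forall>k\<ge>M. P n k" using assms[of n] unfolding eventually_sequentially by blast
    hence "P n (max N M)" by simp
    thus ?thesis by (intro exI[of _ "max N M"]) simp
  qed
  show ?thesis by (rule subseq_choose[of P, OF *]) (rule that)
qed

lemma tendsto_close: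
  fixes f g :: "nat \<Rightarrow> 'a::metric_space"
  assumes "g \<longlonglongrightarrow> y" "(\<lambda>n. dist (f n) (g n)) \<longlonglongrightarrow> 0"
  shows "f \<longlonglongrightarrow> y"
  unfolding tendsto_iff
proof (intro allI impI)
  fix e :: real assume "e > 0"
  hence "e/2 > 0" by simp
  have 1: "eventually (\<lambda>n. dist (g n) y < e/2) sequentially"
    using assms(1)[unfolded tendsto_iff, rule_format, OF \<open>e/2>0\<close>] .
  have 2: "eventually (\<lambda>n. dist (dist (f n) (g n)) 0 < e/2) sequentially"
    using assms(2)[unfolded tendsto_iff, rule_format, OF \<open>e/2>0\<close>] .
  show "eventually (\<lambda>n. dist (f n) y < e) sequentially"
    using eventually_conj[OF 1 2]
  proof (rule eventually_mono)
    fix n assume "dist (g n) y < e/2 \<and> dist (dist (f n) (g n)) 0 < e/2"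
    moreover have "dist (f n) y \<le> dist (f n) (g n) + dist (g n) y" by (rule dist_triangle)
    ultimately show "dist (f n) y < e" by (simp add: dist_real_def)
  qed
qed

lemma eventually_dist_pos:
  fixes f g :: "nat \<Rightarrow> 'a::metric_space"
  assumes "f \<longlonglongrightarrow> x" "g \<longlonglongrightarrow> y" "x \<noteq> y"
  shows "eventually (\<lambda>n. f n \<noteq> g n) sequentially"
proof -
  have "(\<lambda>n. dist (f n) (g n)) \<longlonglongrightarrow> dist x y" using assms by (intro tendsto_intros)
  moreover have "dist x y > 0" using assms by simp
  ultimately have "eventually (\<lambda>n. dist (f n) (g n) > 0) sequentially"
    using order_tendstoD(1) by blast
  thus ?thesis by (rule eventually_mono) auto
qed

context setting begin

lemma finger_L1:
  assumes r: "strict_mono r"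
    and ord: "\<And>n. a n < u n \<and> u n < b n \<and> b n < v n \<and> v n < a n + 1"
    and xy: "x \<in> riemann_sphere" "y \<in> riemann_sphere" "x \<noteq> y"
    and la: "(\<lambda>n. cs (r n) (ee (a n))) \<longlonglongrightarrow> x"
    and lu: "(\<lambda>n. cs (r n) (ee (u n))) \<longlonglongrightarrow> y"
    and lb: "(\<lambda>n. cs (r n) (ee (b n))) \<longlonglongrightarrow> x"
    and lv: "(\<lambda>n. cs (r n) (ee (v n))) \<longlonglongrightarrow> y"
  shows "has_collapsing_finger cs"
proof -
  have ord2: "cyclic_order4 (ee (a k)) (ee (u k)) (ee (b k)) (ee (v k))" for k
  proof -
    have pos: "0 < 2*pi" by simp
    have i1: "2*pi*a k < 2*pi*u k" using ord[of k] pos by (intro mult_strict_left_mono) auto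
    have i2: "2*pi*u k < 2*pi*b k" using ord[of k] pos by (intro mult_strict_left_mono) auto
    have i3: "2*pi*b k < 2 * pi * v k" using ord[of k] pos by (intro mult_strict_left_mono) auto
    have i4: "2 * pi * v k < 2*pi*(a k + 1)" using ord[of k] pos by (intro mult_strict_left_mono) auto
    show ?thesis
    unfolding cyclic_order4_def ee_def
    by (rule exI[of _ "2 * pi * a k"], rule exI[of _ "2 * pi * u k"], rule exI[of _ "2 * pi * b k"],
        rule exI[of _ "2 * pi * v k"]) (use i1 i2 i3 i4 in \<open>simp add: distrib_left\<close>)
  qed
  show ?thesis
    unfolding has_collapsing_finger_def
    apply (rule exI[of _ r], rule conjI[OF r])
    apply (rule exI[of _ "\<lambda>n. ee (a n)"], rule exI[of _ "\<lambda>n. ee (u n)"],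
           rule exI[of _ "\<lambda>n. ee (b n)"], rule exI[of _ "\<lambda>n. ee (v n)"])
    apply (rule exI[of _ x], rule exI[of _ y])
    using xy la lu lb lv ord2 by simp
qed

lemma finger_L2:
  assumes r: "strict_mono r"
    and ord: "\<And>n. a n \<le> u n \<and> u n \<le> b n \<and> b n \<le> v n \<and> v n \<le> a n + 1"
    and xy: "x \<in> riemann_sphere" "y \<in> riemann_sphere" "x \<noteq> y"
    and la: "(\<lambda>n. cs (r n) (ee (a n))) \<longlonglongrightarrow> x"
    and lu: "(\<lambda>n. cs (r n) (ee (u n))) \<longlonglongrightarrow> y"
    and lb: "(\<lambda>n. cs (r n) (ee (b n))) \<longlonglongrightarrow> x"
    and lv: "(\<lambda>n. cs (r n) (ee (v n))) \<longlonglongrightarrow> y"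
  shows "has_collapsing_finger cs"
proof -
  have la': "(\<lambda>n. cs (r n) (ee (a n + 1))) \<longlonglongrightarrow> x" using la by simp
  have "eventually (\<lambda>n. cs (r n) (ee (a n)) \<noteq> cs (r n) (ee (u n))) sequentially"
    by (rule eventually_dist_pos[OF la lu xy(3)])
  moreover have "eventually (\<lambda>n. cs (r n) (ee (u n)) \<noteq> cs (r n) (ee (b n))) sequentially"
    by (rule eventually_dist_pos[OF lu lb]) (use xy in auto)
  moreover have "eventually (\<lambda>n. cs (r n) (ee (b n)) \<noteq> cs (r n) (ee (v n))) sequentially"
    by (rule eventually_dist_pos[OF lb lv xy(3)])
  moreover have "eventually (\<lambda>n. cs (r n) (ee (v n)) \<noteq> cs (r n) (ee (a n + 1))) sequentially"
    by (rule eventually_dist_pos[OF lv la']) (use xy in auto)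
  ultimately have "eventually (\<lambda>n. a n < u n \<and> u n < b n \<and> b n < v n \<and> v n < a n + 1) sequentially"
  proof (eventually_elim)
    case (elim n)
    hence "a n \<noteq> u n" "u n \<noteq> b n" "b n \<noteq> v n" "v n \<noteq> a n + 1" by auto
    moreover have "a n \<le> u n" "u n \<le> b n" "b n \<le> v n" "v n \<le> a n + 1" using ord[of n] by auto
    ultimately show ?case by linarith
  qed
  then obtain N where N: "\<And>n. n \<ge> N \<Longrightarrow> a n < u n \<and> u n < b n \<and> b n < v n \<and> v n < a n + 1"
    unfolding eventually_sequentially by blast
  show ?thesis
  proof (rule finger_L1[of "\<lambda>n. r (n + N)" "\<lambda>n. a (n + N)" "\<lambda>n. u (n + N)" "\<lambda>n. b (n + N)" "\<lambda>n. v (n + N)" x y])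
    show "strict_mono (\<lambda>n. r (n + N))" using r by (simp add: strict_mono_def)
    show "(\<lambda>n. cs (r (n + N)) (ee (a (n + N)))) \<longlonglongrightarrow> x" using LIMSEQ_ignore_initial_segment[OF la, of N] .
    show "(\<lambda>n. cs (r (n + N)) (ee (u (n + N)))) \<longlonglongrightarrow> y" using LIMSEQ_ignore_initial_segment[OF lu, of N] .
    show "(\<lambda>n. cs (r (n + N)) (ee (b (n + N)))) \<longlonglongrightarrow> x" using LIMSEQ_ignore_initial_segment[OF lb, of N] .
    show "(\<lambda>n. cs (r (n + N)) (ee (v (n + N)))) \<longlonglongrightarrow> y" using LIMSEQ_ignore_initial_segment[OF lv, of N] .
  qed (use N xy in auto)
qed

lemma finger_L3:
  assumes r: "strict_mono r"
    and ord: "\<And>n. a n \<le> u n \<and> u n \<le> b n \<and> b n \<le> v n \<and> v n \<le> a n + 1"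
    and Y: "compact Y" "Y \<subseteq> riemann_sphere" "x \<notin> Y" "\<And>n. j n \<in> Y"
    and x: "x \<in> riemann_sphere"
    and la: "(\<lambda>n. cs (r n) (ee (a n))) \<longlonglongrightarrow> x"
    and lb: "(\<lambda>n. cs (r n) (ee (b n))) \<longlonglongrightarrow> x"
    and lu: "(\<lambda>n. dist (cs (r n) (ee (u n))) (j n)) \<longlonglongrightarrow> 0"
    and lv: "(\<lambda>n. dist (cs (r n) (ee (v n))) (j n)) \<longlonglongrightarrow> 0"
  shows "has_collapsing_finger cs"
proof -
  obtain y q where y: "y \<in> Y" and q: "strict_mono q" and lj: "(j \<circ> q) \<longlonglongrightarrow> y"
    using seq_compactE[OF compact_imp_seq_compact[OF Y(1)], of j] Y(4) by blast
  show ?thesis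
  proof (rule finger_L2[of "r \<circ> q" "a \<circ> q" "u \<circ> q" "b \<circ> q" "v \<circ> q" x y])
    show "strict_mono (r \<circ> q)" using r q by (rule strict_mono_o)
    show "(\<lambda>n. cs ((r \<circ> q) n) (ee ((a \<circ> q) n))) \<longlonglongrightarrow> x"
      using LIMSEQ_subseq_LIMSEQ[OF la q] by (simp add: o_def)
    show "(\<lambda>n. cs ((r \<circ> q) n) (ee ((b \<circ> q) n))) \<longlonglongrightarrow> x"
      using LIMSEQ_subseq_LIMSEQ[OF lb q] by (simp add: o_def)
    show "(\<lambda>n. cs ((r \<circ> q) n) (ee ((u \<circ> q) n))) \<longlonglongrightarrow> y"
      by (rule tendsto_close[OF lj]) (use LIMSEQ_subseq_LIMSEQ[OF lu q] in \<open>simp add: o_def\<close>)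
    show "(\<lambda>n. cs ((r \<circ> q) n) (ee ((v \<circ> q) n))) \<longlonglongrightarrow> y"
      by (rule tendsto_close[OF lj]) (use LIMSEQ_subseq_LIMSEQ[OF lv q] in \<open>simp add: o_def\<close>)
  qed (use ord x y Y in auto)
qed

end

lemma tendsto_bound_inv:
  fixes d :: "nat \<Rightarrow> real"
  assumes "\<And>n. 0 \<le> d n" "\<And>n. d n \<le> inverse (real (Suc n))"
  shows "d \<longlonglongrightarrow> 0"
  by (rule tendsto_sandwich[of "\<lambda>n. 0" d sequentially "\<lambda>n. inverse (real (Suc n))"])
     (use assms LIMSEQ_inverse_real_of_nat in auto)

lemma inverse_Suc_mono: "m \<le> n \<Longrightarrow> inverse (real (Suc n)) \<le> inverse (real (Suc m))"
  by (simp add: le_imp_inverse_le)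

context setting begin

lemma finger_L4:
  assumes k: "strict_mono k" and "\<epsilon> > 0"
   and ab: "\<And>n. a n \<le> b n \<and> b n \<le> a n + 1"
   and s: "\<And>n. a n \<le> s n \<and> s n \<le> b n \<and> dist (cs (k n) (ee (s n))) (cs (k n) (ee (a n))) \<ge> \<epsilon>"
   and s': "\<And>n. b n \<le> s' n \<and> s' n \<le> a n + 1 \<and> dist (cs (k n) (ee (s' n))) (cs (k n) (ee (a n))) \<ge> \<epsilon>"
   and close: "\<And>n. dist (cs (k n) (ee (a n))) (cs (k n) (ee (b n))) < inverse (real (Suc n))"
  shows "has_collapsing_finger cs"
proof -
  obtain x q where xRS: "x \<in> riemann_sphere" and q: "strict_mono q"
      and lx: "((\<lambda>n. cs (k n) (ee (a n))) \<circ> q) \<longlonglongrightarrow> x"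
    using seq_compactE[OF compact_imp_seq_compact[OF compact_RS], of "\<lambda>n. cs (k n) (ee (a n))"] cs_RS
    by (metis ee_in)
  define K where "K = k \<circ> q"
  define A where "A = a \<circ> q"
  define B where "B = b \<circ> q"
  define S where "S = s \<circ> q"
  define S' where "S' = s' \<circ> q"
  have Kmono: "strict_mono K" unfolding K_def using k q by (rule strict_mono_o)
  have lA: "(\<lambda>n. cs (K n) (ee (A n))) \<longlonglongrightarrow> x" using lx by (simp add: K_def A_def o_def)
  have lB: "(\<lambda>n. cs (K n) (ee (B n))) \<longlonglongrightarrow> x"
  proof (rule tendsto_close[OF lA], rule tendsto_bound_inv)
    fix n
    show "0 \<le> dist (cs (K n) (ee (B n))) (cs (K n) (ee (A n)))" by simp
    have "dist (cs (K n) (ee (B n))) (cs (K n) (ee (A n))) < inverse (real (Suc (q n)))"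
      using close[of "q n"] by (simp add: K_def A_def B_def dist_commute)
    also have "\<dots> \<le> inverse (real (Suc n))" by (rule inverse_Suc_mono[OF seq_suble[OF q]])
    finally show "dist (cs (K n) (ee (B n))) (cs (K n) (ee (A n))) \<le> inverse (real (Suc n))" by simp
  qed
  have xJ: "x \<in> J"
    by (rule F1[OF Kmono, of "\<lambda>n. cs (K n) (ee (A n))"]) (use lA in auto)
  then obtain z0 where z0: "z0 \<in> circle1" "x = c z0" by auto
  have z0nz: "z0 \<noteq> 0" using z0 by (auto simp: circle1_def)
  define f where "f t = c (z0 * ee t)" for t
  have circ: "z0 * ee t \<in> circle1" for t using z0 by (simp add: circle1_def norm_mult)
  have contf: "continuous_on UNIV f" unfolding f_def
    by (rule continuous_on_compose2[OF cont_c]) (use circ in \<open>auto intro!: continuous_intros\<close>)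
  have f0: "f 0 = x" by (simp add: f_def z0 ee_def)
  have fper: "f (t - 1) = f t" for t
  proof -
    have "ee (t - 1) = ee t" by (simp add: ee_eq_iff)
    thus ?thesis by (simp add: f_def)
  qed
  have "\<epsilon>/4 > 0" using \<open>\<epsilon>>0\<close> by simp
  have "\<forall>x\<in>UNIV. \<forall>e>0. \<exists>d>0. \<forall>x'\<in>UNIV. dist x' x < d \<longrightarrow> dist (f x') (f x) < e"
    using contf by (simp only: continuous_on_iff)
  from this[rule_format, OF UNIV_I \<open>\<epsilon>/4>0\<close>]
  obtain d0 where d0: "d0 > 0" "\<And>t. dist t 0 < d0 \<Longrightarrow> dist (f t) (f 0) < \<epsilon>/4"
    by blast
  define \<theta> where "\<theta> = min (d0/2) (1/2)"
  have th: "0 < \<theta>" "\<theta> \<le> 1/2" "\<theta> < d0" using d0 by (auto simp: \<theta>_def)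
  have far: "\<theta> \<le> t \<and> t \<le> 1 - \<theta>" if "0 \<le> t" "t \<le> 1" "dist (f t) x \<ge> \<epsilon>/4" for t
  proof (rule ccontr)
    assume "\<not> (\<theta> \<le> t \<and> t \<le> 1 - \<theta>)"
    hence "t < \<theta> \<or> t > 1 - \<theta>" by auto
    thus False
    proof
      assume "t < \<theta>"
      hence "dist (f t) (f 0) < \<epsilon>/4" using that th by (intro d0(2)) (simp add: dist_real_def)
      thus False using that f0 by simp
    next
      assume "t > 1 - \<theta>"
      hence "dist (f (t - 1)) (f 0) < \<epsilon>/4" using that th by (intro d0(2)) (simp add: dist_real_def)
      thus False using that f0 fper by simp
    qed
  qed
  define Y where "Y = f ` {\<theta>..1-\<theta>}"
  have Ycomp: "compact Y" unfolding Y_def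
    by (rule compact_continuous_image) (use contf continuous_on_subset in auto)
  have Yconn: "connected Y" unfolding Y_def
    by (rule connected_continuous_image) (use contf continuous_on_subset in auto)
  have YJ: "Y \<subseteq> J" unfolding Y_def f_def using circ by auto
  have YRS: "Y \<subseteq> riemann_sphere" using YJ J_RS by auto
  have xY: "x \<notin> Y"
  proof
    assume "x \<in> Y"
    then obtain t where t: "\<theta> \<le> t" "t \<le> 1 - \<theta>" "f t = x" by (auto simp: Y_def)
    hence "z0 * ee t = z0" using inj_c circ z0 unfolding f_def by (metis inj_onD)
    hence "ee t = 1" using z0nz by simp
    hence "t \<in> \<int>" by (simp add: ee_eq_1_iff)
    then obtain m :: int where "t = of_int m" by (auto elim: Ints_cases)
    moreover have "0 < t" "t < 1" using t th by auto
    ultimately show False by auto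
  qed
  have factor: "\<exists>t. 0 \<le> t \<and> t < 1 \<and> w = z0 * ee t" if "w \<in> circle1" for w
  proof -
    have "w / z0 \<in> circle1" using that z0 by (simp add: circle1_def norm_divide)
    then obtain t where "0 \<le> t" "t < 1" "ee t = w / z0" using ee_surj by blast
    thus ?thesis using z0nz by (intro exI[of _ t]) auto
  qed
  have claim: "eventually (\<lambda>n. \<exists>u v j. A n \<le> u \<and> u \<le> B n \<and> B n \<le> v \<and> v \<le> A n + 1 \<and> j \<in> Y \<and>
      dist (cs (K n) (ee u)) j < inverse (real (Suc m)) \<and> dist (cs (K n) (ee v)) j < inverse (real (Suc m))) sequentially"
    for m
  proof -
    define \<eta> where "\<eta> = min (\<epsilon>/8) (inverse (real (Suc m)) / 2)"
    have ip: "inverse (real (Suc m)) > 0" by simp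
    have \<eta>: "\<eta> > 0" "\<eta> \<le> \<epsilon>/8" "\<eta> \<le> inverse (real (Suc m)) / 2" using \<open>\<epsilon>>0\<close> ip
      unfolding \<eta>_def by (auto simp del: of_nat_Suc)
    have \<eta>3: "\<eta> < inverse (real (Suc m))" using \<eta>(3) ip by linarith
    have ev1: "eventually (\<lambda>n. dist (cs (K n) (ee (A n))) x < \<epsilon>/4) sequentially"
      using lA[unfolded tendsto_iff, rule_format, OF \<open>\<epsilon>/4>0\<close>] .
    have ev2: "eventually (\<lambda>n. \<forall>j\<in>J. \<exists>z\<in>circle1. dist (cs (K n) z) j < \<eta>) sequentially"
      using eventually_compose_filterlim[OF F2[OF \<eta>(1)] filterlim_subseq[OF Kmono]] by simp
    have ev3: "eventually (\<lambda>n. \<forall>z\<in>circle1. \<exists>w\<in>circle1. dist (cs (K n) z) (c w) < \<eta>) sequentially"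
      using eventually_compose_filterlim[OF F3[OF \<eta>(1)] filterlim_subseq[OF Kmono]] by simp
    show ?thesis
      using eventually_conj[OF ev1 eventually_conj[OF ev2 ev3]]
    proof (rule eventually_mono)
      fix n
      assume H: "dist (cs (K n) (ee (A n))) x < \<epsilon>/4 \<and> (\<forall>j\<in>J. \<exists>z\<in>circle1. dist (cs (K n) z) j < \<eta>) \<and>
                 (\<forall>z\<in>circle1. \<exists>w\<in>circle1. dist (cs (K n) z) (c w) < \<eta>)"
      define C where "C = cs (K n)"
      define P where "P = (\<lambda>t. C (ee t)) ` {A n..B n}"
      define Q where "Q = (\<lambda>t. C (ee t)) ` {B n..A n + 1}"
      have abn: "A n \<le> B n" "B n \<le> A n + 1" using ab[of "q n"] by (auto simp: A_def B_def)
      have contCe: "continuous_on X (\<lambda>t. C (ee t))" for X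
        unfolding C_def by (rule continuous_on_compose2[OF cont_cs[of "K n"] continuous_ee]) auto
      have Pc: "compact P" "P \<noteq> {}" unfolding P_def using abn
        by (auto intro!: compact_continuous_image contCe)
      have Qc: "compact Q" "Q \<noteq> {}" unfolding Q_def using abn
        by (auto intro!: compact_continuous_image contCe)
      have cover: "C z \<in> P \<union> Q" if zc: "z \<in> circle1" for z
      proof -
        obtain t where t: "A n \<le> t" "t < A n + 1" "ee t = z" using ee_surj_from[OF zc, of "A n"] by blast
        show ?thesis
        proof (cases "t \<le> B n")
          case True thus ?thesis using t unfolding P_def by auto
        next
          case False thus ?thesis using t unfolding Q_def by auto
        qed
      qed
      have xA: "dist (C (ee (A n))) x < \<epsilon>/4" using H by (simp add: C_def)
      have meet: "\<exists>y\<in>Y. infdist y R < \<eta>" if mt: "p \<in> R" "dist p (C (ee (A n))) \<ge> \<epsilon>" "p \<in> C ` circle1" for p R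
      proof -
        have "dist p x \<ge> 3*\<epsilon>/4"
          using mt(2) xA dist_triangle[of p "C (ee (A n))" x] dist_commute[of x "C (ee (A n))"] by linarith
        obtain w where w: "w \<in> circle1" "dist p (c w) < \<eta>" using H mt(3) by (auto simp: C_def)
        obtain t where t: "0 \<le> t" "t < 1" "w = z0 * ee t" using factor[OF w(1)] by blast
        have "dist (c w) x \<ge> \<epsilon>/4"
          using \<open>dist p x \<ge> 3*\<epsilon>/4\<close> w(2) \<eta>(2) dist_triangle[of p x "c w"] dist_commute[of x "c w"] \<open>\<epsilon>>0\<close> by linarith
        hence "c w \<in> Y" using far[of t] t unfolding Y_def f_def by auto
        moreover have "infdist (c w) R < \<eta>"
          using infdist_le[OF mt(1), of "c w"] w(2) by (simp add: dist_commute)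
        ultimately show ?thesis by blast
      qed
      have sA: "A n \<le> S n" "S n \<le> B n" "dist (C (ee (S n))) (C (ee (A n))) \<ge> \<epsilon>"
        using s[of "q n"] by (auto simp: A_def B_def S_def C_def K_def)
      have sB: "B n \<le> S' n" "S' n \<le> A n + 1" "dist (C (ee (S' n))) (C (ee (A n))) \<ge> \<epsilon>"
        using s'[of "q n"] by (auto simp: A_def B_def S'_def C_def K_def)
      obtain y1 where y1: "y1 \<in> Y" "infdist y1 P < \<eta>"
        using meet[of "C (ee (S n))" P] sA unfolding P_def by auto
      obtain y2 where y2: "y2 \<in> Y" "infdist y2 Q < \<eta>"
        using meet[of "C (ee (S' n))" Q] sB unfolding Q_def by auto
      have Ycov: "Y \<subseteq> {y. infdist y P \<le> \<eta>} \<union> {y. infdist y Q \<le> \<eta>}"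
      proof
        fix y assume "y \<in> Y"
        hence "y \<in> J" using YJ by auto
        then obtain z where z: "z \<in> circle1" "dist (C z) y < \<eta>" using H by (auto simp: C_def)
        have "C z \<in> P \<or> C z \<in> Q" using cover[OF z(1)] by auto
        thus "y \<in> {y. infdist y P \<le> \<eta>} \<union> {y. infdist y Q \<le> \<eta>}"
          using infdist_le[of "C z" P y] infdist_le[of "C z" Q y] z(2) by (auto simp: dist_commute)
      qed
      have clP: "closed {y. infdist y P \<le> \<eta>}"
        by (rule closed_Collect_le) (auto intro: continuous_intros)
      have clQ: "closed {y. infdist y Q \<le> \<eta>}"
        by (rule closed_Collect_le) (auto intro: continuous_intros)
      have ne1: "{y. infdist y P \<le> \<eta>} \<inter> Y \<noteq> {}" using y1 less_imp_le[OF y1(2)] by blast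
      have ne2: "{y. infdist y Q \<le> \<eta>} \<inter> Y \<noteq> {}" using y2 less_imp_le[OF y2(2)] by blast
      have "{y. infdist y P \<le> \<eta>} \<inter> {y. infdist y Q \<le> \<eta>} \<inter> Y \<noteq> {}"
      proof
        assume "{y. infdist y P \<le> \<eta>} \<inter> {y. infdist y Q \<le> \<eta>} \<inter> Y = {}"
        hence "\<exists>e1 e2. closed e1 \<and> closed e2 \<and> Y \<subseteq> e1 \<union> e2 \<and> e1 \<inter> e2 \<inter> Y = {} \<and> e1 \<inter> Y \<noteq> {} \<and> e2 \<inter> Y \<noteq> {}"
          using clP clQ Ycov ne1 ne2 by blast
        thus False using Yconn unfolding connected_closed by blast
      qed
      then obtain j where j: "j \<in> Y" "infdist j P \<le> \<eta>" "infdist j Q \<le> \<eta>" by auto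
      obtain pp where pp: "pp \<in> P" "infdist j P = dist j pp"
        using infdist_attains_inf[OF compact_imp_closed[OF Pc(1)] Pc(2)] by blast
      obtain qq where qq: "qq \<in> Q" "infdist j Q = dist j qq"
        using infdist_attains_inf[OF compact_imp_closed[OF Qc(1)] Qc(2)] by blast
      obtain u where u: "A n \<le> u" "u \<le> B n" "pp = C (ee u)" using pp(1) unfolding P_def by auto
      obtain v where v: "B n \<le> v" "v \<le> A n + 1" "qq = C (ee v)" using qq(1) unfolding Q_def by auto
      show "\<exists>u v j. A n \<le> u \<and> u \<le> B n \<and> B n \<le> v \<and> v \<le> A n + 1 \<and> j \<in> Y \<and>
          dist (cs (K n) (ee u)) j < inverse (real (Suc m)) \<and> dist (cs (K n) (ee v)) j < inverse (real (Suc m))"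
        apply (rule exI[of _ u], rule exI[of _ v], rule exI[of _ j])
        using u v j pp qq \<eta>3 by (auto simp: C_def dist_commute)
    qed
  qed
  obtain q2 where q2: "strict_mono q2" and q2P: "\<And>m. \<exists>u v j. A (q2 m) \<le> u \<and> u \<le> B (q2 m) \<and> B (q2 m) \<le> v \<and> v \<le> A (q2 m) + 1 \<and> j \<in> Y \<and>
      dist (cs (K (q2 m)) (ee u)) j < inverse (real (Suc m)) \<and> dist (cs (K (q2 m)) (ee v)) j < inverse (real (Suc m))"
    using subseq_eventually[of "\<lambda>m n. \<exists>u v j. A n \<le> u \<and> u \<le> B n \<and> B n \<le> v \<and> v \<le> A n + 1 \<and> j \<in> Y \<and>
      dist (cs (K n) (ee u)) j < inverse (real (Suc m)) \<and> dist (cs (K n) (ee v)) j < inverse (real (Suc m))", OF claim]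
    by blast
  obtain U V jj where UVJ: "\<And>m. A (q2 m) \<le> U m \<and> U m \<le> B (q2 m) \<and> B (q2 m) \<le> V m \<and> V m \<le> A (q2 m) + 1 \<and> jj m \<in> Y \<and>
      dist (cs (K (q2 m)) (ee (U m))) (jj m) < inverse (real (Suc m)) \<and> dist (cs (K (q2 m)) (ee (V m))) (jj m) < inverse (real (Suc m))"
  proof -
    have "\<forall>m. \<exists>u v j. A (q2 m) \<le> u \<and> u \<le> B (q2 m) \<and> B (q2 m) \<le> v \<and> v \<le> A (q2 m) + 1 \<and> j \<in> Y \<and>
      dist (cs (K (q2 m)) (ee u)) j < inverse (real (Suc m)) \<and> dist (cs (K (q2 m)) (ee v)) j < inverse (real (Suc m))"
      using q2P by blast
    hence "\<exists>U. \<forall>m. \<exists>v j. A (q2 m) \<le> U m \<and> U m \<le> B (q2 m) \<and> B (q2 m) \<le> v \<and> v \<le> A (q2 m) + 1 \<and> j \<in> Y \<and>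
      dist (cs (K (q2 m)) (ee (U m))) j < inverse (real (Suc m)) \<and> dist (cs (K (q2 m)) (ee v)) j < inverse (real (Suc m))"
      by (rule choice)
    then obtain U where "\<forall>m. \<exists>v j. A (q2 m) \<le> U m \<and> U m \<le> B (q2 m) \<and> B (q2 m) \<le> v \<and> v \<le> A (q2 m) + 1 \<and> j \<in> Y \<and>
      dist (cs (K (q2 m)) (ee (U m))) j < inverse (real (Suc m)) \<and> dist (cs (K (q2 m)) (ee v)) j < inverse (real (Suc m))"
      by blast
    hence "\<exists>V. \<forall>m. \<exists>j. A (q2 m) \<le> U m \<and> U m \<le> B (q2 m) \<and> B (q2 m) \<le> V m \<and> V m \<le> A (q2 m) + 1 \<and> j \<in> Y \<and>
      dist (cs (K (q2 m)) (ee (U m))) j < inverse (real (Suc m)) \<and> dist (cs (K (q2 m)) (ee (V m))) j < inverse (real (Suc m))"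
      by (rule choice)
    then obtain V where "\<forall>m. \<exists>j. A (q2 m) \<le> U m \<and> U m \<le> B (q2 m) \<and> B (q2 m) \<le> V m \<and> V m \<le> A (q2 m) + 1 \<and> j \<in> Y \<and>
      dist (cs (K (q2 m)) (ee (U m))) j < inverse (real (Suc m)) \<and> dist (cs (K (q2 m)) (ee (V m))) j < inverse (real (Suc m))"
      by blast
    hence "\<exists>jj. \<forall>m. A (q2 m) \<le> U m \<and> U m \<le> B (q2 m) \<and> B (q2 m) \<le> V m \<and> V m \<le> A (q2 m) + 1 \<and> jj m \<in> Y \<and>
      dist (cs (K (q2 m)) (ee (U m))) (jj m) < inverse (real (Suc m)) \<and> dist (cs (K (q2 m)) (ee (V m))) (jj m) < inverse (real (Suc m))"
      by (rule choice)
    then obtain jj where "\<forall>m. A (q2 m) \<le> U m \<and> U m \<le> B (q2 m) \<and> B (q2 m) \<le> V m \<and> V m \<le> A (q2 m) + 1 \<and> jj m \<in> Y \<and>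
      dist (cs (K (q2 m)) (ee (U m))) (jj m) < inverse (real (Suc m)) \<and> dist (cs (K (q2 m)) (ee (V m))) (jj m) < inverse (real (Suc m))"
      by blast
    thus ?thesis using that by blast
  qed
  show ?thesis
  proof (rule finger_L3[of "K \<circ> q2" "A \<circ> q2" U "B \<circ> q2" V Y x jj])
    show "strict_mono (K \<circ> q2)" using Kmono q2 by (rule strict_mono_o)
    show "(\<lambda>n. cs ((K \<circ> q2) n) (ee ((A \<circ> q2) n))) \<longlonglongrightarrow> x"
      using LIMSEQ_subseq_LIMSEQ[OF lA q2] by (simp add: o_def)
    show "(\<lambda>n. cs ((K \<circ> q2) n) (ee ((B \<circ> q2) n))) \<longlonglongrightarrow> x"
      using LIMSEQ_subseq_LIMSEQ[OF lB q2] by (simp add: o_def)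
    show "(\<lambda>n. dist (cs ((K \<circ> q2) n) (ee (U n))) (jj n)) \<longlonglongrightarrow> 0"
      by (rule tendsto_bound_inv) (use UVJ in \<open>auto intro: less_imp_le\<close>)
    show "(\<lambda>n. dist (cs ((K \<circ> q2) n) (ee (V n))) (jj n)) \<longlonglongrightarrow> 0"
      by (rule tendsto_bound_inv) (use UVJ in \<open>auto intro: less_imp_le\<close>)
  qed (use UVJ Ycomp YRS xY xRS in auto)
qed

end

context setting begin

definition Good :: "real \<Rightarrow> real \<Rightarrow> nat \<Rightarrow> bool" where
  "Good \<epsilon> \<delta> k \<longleftrightarrow> (\<forall>a b. a \<le> b \<and> b \<le> a + 1 \<and> dist (cs k (ee a)) (cs k (ee b)) < \<delta> \<longrightarrow>
        (\<forall>s\<in>{a..b}. dist (cs k (ee s)) (cs k (ee a)) < \<epsilon>) \<or> (\<forall>s\<in>{b..a+1}. dist (cs k (ee s)) (cs k (ee a)) < \<epsilon>))"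

lemma unif_U:
  assumes nf: "\<not> has_collapsing_finger cs" and "\<epsilon> > 0"
  shows "\<exists>\<delta>>0. eventually (Good \<epsilon> \<delta>) sequentially"
proof (rule ccontr)
  assume H: "\<not> (\<exists>\<delta>>0. eventually (Good \<epsilon> \<delta>) sequentially)"
  have *: "\<exists>k\<ge>N. \<not> Good \<epsilon> (inverse (real (Suc n))) k" for n N
  proof -
    have "\<not> eventually (Good \<epsilon> (inverse (real (Suc n)))) sequentially" using H by simp
    thus ?thesis unfolding eventually_sequentially by blast
  qed
  obtain k where k: "strict_mono k" and nk: "\<And>n. \<not> Good \<epsilon> (inverse (real (Suc n))) (k n)"
    by (rule subseq_choose[of "\<lambda>n k. \<not> Good \<epsilon> (inverse (real (Suc n))) k", OF *]) blast
  define Bad where "Bad n a b s s' \<longleftrightarrow> a \<le> b \<and> b \<le> a + 1 \<and>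
      dist (cs (k n) (ee a)) (cs (k n) (ee b)) < inverse (real (Suc n)) \<and>
      a \<le> s \<and> s \<le> b \<and> dist (cs (k n) (ee s)) (cs (k n) (ee a)) \<ge> \<epsilon> \<and>
      b \<le> s' \<and> s' \<le> a + 1 \<and> dist (cs (k n) (ee s')) (cs (k n) (ee a)) \<ge> \<epsilon>" for n a b s s'
  have "\<forall>n. \<exists>t. Bad n (fst t) (fst (snd t)) (fst (snd (snd t))) (snd (snd (snd t)))"
  proof
    fix n
    obtain a b where ab: "a \<le> b" "b \<le> a + 1" "dist (cs (k n) (ee a)) (cs (k n) (ee b)) < inverse (real (Suc n))"
      and n1: "\<not> (\<forall>s\<in>{a..b}. dist (cs (k n) (ee s)) (cs (k n) (ee a)) < \<epsilon>)"
      and n2: "\<not> (\<forall>s\<in>{b..a+1}. dist (cs (k n) (ee s)) (cs (k n) (ee a)) < \<epsilon>)"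
      using nk[of n] unfolding Good_def not_all not_imp by blast
    obtain s where s: "s \<in> {a..b}" "\<not> dist (cs (k n) (ee s)) (cs (k n) (ee a)) < \<epsilon>" using n1 by blast
    obtain s' where s': "s' \<in> {b..a+1}" "\<not> dist (cs (k n) (ee s')) (cs (k n) (ee a)) < \<epsilon>" using n2 by blast
    show "\<exists>t. Bad n (fst t) (fst (snd t)) (fst (snd (snd t))) (snd (snd (snd t)))"
      by (rule exI[of _ "(a, b, s, s')"]) (use ab s s' in \<open>simp add: Bad_def\<close>)
  qed
  then obtain T where T: "\<And>n. Bad n (fst (T n)) (fst (snd (T n))) (fst (snd (snd (T n)))) (snd (snd (snd (T n))))"
    by (metis (no_types) choice)
  have "has_collapsing_finger cs"
    by (rule finger_L4[OF k \<open>\<epsilon>>0\<close>, of "\<lambda>n. fst (T n)" "\<lambda>n. fst (snd (T n))"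
           "\<lambda>n. fst (snd (snd (T n)))" "\<lambda>n. snd (snd (snd (T n)))"])
       (use T in \<open>simp_all add: Bad_def\<close>)
  thus False using nf by simp
qed

end

definition nopat :: "(real \<Rightarrow> real) \<Rightarrow> real \<Rightarrow> bool" where
  "nopat F h \<longleftrightarrow> (\<forall>u t1 v t2. u \<le> t1 \<and> t1 \<le> v \<and> v \<le> t2 \<and> t2 \<le> u + 1 \<and> F v - F u \<in> \<int> \<and>
     (F t1 - F u - h \<in> \<int> \<or> F t1 - F u + h \<in> \<int>) \<and> (F t2 - F u - h \<in> \<int> \<or> F t2 - F u + h \<in> \<int>) \<longrightarrow> False)"

lemma ivt_any:
  fixes F :: "real \<Rightarrow> real"
  assumes "continuous_on UNIV F" "a \<le> b" "min (F a) (F b) \<le> y" "y \<le> max (F a) (F b)"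
  shows "\<exists>x. a \<le> x \<and> x \<le> b \<and> F x = y"
proof (cases "F a \<le> F b")
  case True
  have "continuous_on {a..b} F" using assms(1) continuous_on_subset by blast
  thus ?thesis using IVT'[of F a y b] assms True by (auto simp: min_def max_def)
next
  case False
  have "continuous_on {a..b} F" using assms(1) continuous_on_subset by blast
  thus ?thesis using IVT2'[of F b y a] assms False by (auto simp: min_def max_def)
qed

lemma per_nat:
  fixes F :: "real \<Rightarrow> real"
  assumes "\<And>t. F (t + 1) = F t + d"
  shows "F (t + real n) = F t + real n * d"
proof (induction n)
  case (Suc n)
  have "F (t + real (Suc n)) = F ((t + real n) + 1)" by (simp add: algebra_simps)
  also have "\<dots> = F (t + real n) + d" by (rule assms)
  finally show ?case using Suc by (simp add: algebra_simps)
qed simp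

lemma per_int:
  fixes F :: "real \<Rightarrow> real"
  assumes "\<And>t. F (t + 1) = F t + d"
  shows "F (t + of_int n) = F t + of_int n * d"
proof (cases "n \<ge> 0")
  case True
  then obtain m where "n = int m" by (metis nonneg_eq_int)
  thus ?thesis using per_nat[of F d t m] assms by simp
next
  case False
  then obtain m where m: "n = - int m" by (metis nonpos_int_cases not_le order_less_imp_le)
  have "F ((t - real m) + real m) = F (t - real m) + real m * d" using per_nat[of F d "t - real m" m] assms by blast
  thus ?thesis using m by simp
qed

locale liftctx =
  fixes F :: "real \<Rightarrow> real" and h :: real and d :: int
  assumes cont: "continuous_on UNIV F"
    and per: "\<And>t. F (t + 1) = F t + d"
    and h: "0 < h" "h \<le> 1/8"
    and np: "nopat F h"
    and ns: "\<And>y. \<exists>t. \<not> (y \<le> F t \<and> F t \<le> y + 1/4)"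
begin

lemma ivt: "a \<le> b \<Longrightarrow> min (F a) (F b) \<le> y \<Longrightarrow> y \<le> max (F a) (F b) \<Longrightarrow> \<exists>x. a \<le> x \<and> x \<le> b \<and> F x = y"
  using ivt_any[OF cont] by blast

lemma npD:
  assumes "u \<le> t1" "t1 \<le> v" "v \<le> t2" "t2 \<le> u + 1" "F v - F u \<in> \<int>"
    "F t1 - F u - h \<in> \<int> \<or> F t1 - F u + h \<in> \<int>" "F t2 - F u - h \<in> \<int> \<or> F t2 - F u + h \<in> \<int>"
  shows False
  using np assms unfolding nopat_def by blast

lemma d_ge2: "d \<ge> 2 \<Longrightarrow> False"
proof -
  assume d: "d \<ge> 2"
  have F1: "F 1 = F 0 + d" using per[of 0] by simp
  obtain v where v: "0 \<le> v" "v \<le> 1" "F v = F 0 + 1" using ivt[of 0 1 "F 0 + 1"] F1 d by auto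
  obtain t1 where t1: "0 \<le> t1" "t1 \<le> v" "F t1 = F 0 + h" using ivt[of 0 v "F 0 + h"] v h by auto
  obtain t2 where t2: "v \<le> t2" "t2 \<le> 1" "F t2 = F 0 + 1 + h" using ivt[of v 1 "F 0 + 1 + h"] v h F1 d by auto
  show False by (rule npD[of 0 t1 v t2]) (use v t1 t2 in auto)
qed

lemma d_le2: "d \<le> -2 \<Longrightarrow> False"
proof -
  assume d: "d \<le> -2"
  have F1: "F 1 = F 0 + d" using per[of 0] by simp
  obtain v where v: "0 \<le> v" "v \<le> 1" "F v = F 0 - 1" using ivt[of 0 1 "F 0 - 1"] F1 d by auto
  obtain t1 where t1: "0 \<le> t1" "t1 \<le> v" "F t1 = F 0 - h" using ivt[of 0 v "F 0 - h"] v h by auto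
  obtain t2 where t2: "v \<le> t2" "t2 \<le> 1" "F t2 = F 0 - 1 - h" using ivt[of v 1 "F 0 - 1 - h"] v h F1 d by auto
  have "F t2 - F 0 + h = -1" using t2 by simp
  show False by (rule npD[of 0 t1 v t2]) (use v t1 t2 in auto)
qed

lemma d_0: "d = 0 \<Longrightarrow> False"
proof -
  assume d: "d = 0"
  have perF: "F (t + of_int n) = F t" for t n using per_int[of F d t n] per d by simp
  have red: "F t = F (t - of_int \<lfloor>t\<rfloor>)" for t using perF[of "t - of_int \<lfloor>t\<rfloor>" "\<lfloor>t\<rfloor>"] by simp
  have fr: "0 \<le> t - of_int \<lfloor>t\<rfloor>" "t - of_int \<lfloor>t\<rfloor> \<le> 1" for t by linarith+
  have c01: "continuous_on {0..1::real} F" using cont continuous_on_subset by blast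
  obtain a where a: "a \<in> {0..1}" "\<And>t. t \<in> {0..1} \<Longrightarrow> F a \<le> F t"
    using continuous_attains_inf[OF compact_Icc _ c01] by auto
  obtain b0 where b0: "b0 \<in> {0..1}" "\<And>t. t \<in> {0..1} \<Longrightarrow> F t \<le> F b0"
    using continuous_attains_sup[OF compact_Icc _ c01] by auto
  define m where "m = F a"
  define M where "M = F b0"
  have mM: "m \<le> F t" "F t \<le> M" for t
  proof -
    have "t - of_int \<lfloor>t\<rfloor> \<in> {0..1}" using fr[of t] by simp
    thus "m \<le> F t" "F t \<le> M" using a(2) b0(2) red[of t] by (simp_all add: m_def M_def)
  qed
  show False
  proof (cases "M - m < 2 * h")
    case True
    obtain t where "\<not> (m \<le> F t \<and> F t \<le> m + 1/4)" using ns by blast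
    thus False using mM[of t] True h by auto
  next
    case False
    define b where "b = b0 - of_int \<lfloor>b0 - a\<rfloor>"
    have "a \<le> b" "b \<le> a + 1" unfolding b_def by linarith+
    moreover have "F b = M" unfolding b_def M_def using perF[of b0 "- \<lfloor>b0 - a\<rfloor>"] by simp
    ultimately have b: "a \<le> b" "b \<le> a + 1" "F b = M" by auto
    have Fa1: "F (a + 1) = m" using per[of a] d by (simp add: m_def)
    obtain u where u: "a \<le> u" "u \<le> b" "F u = m + h" using ivt[of a b "m + h"] b False h by (auto simp: m_def)
    obtain t1 where t1: "u \<le> t1" "t1 \<le> b" "F t1 = m + 2 * h" using ivt[of u b "m + 2 * h"] u b False h by auto
    obtain v where v: "b \<le> v" "v \<le> a + 1" "F v = m + h" using ivt[of b "a + 1" "m + h"] b False h Fa1 by auto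
    have "F (a + 1) - F u + h = 0" using Fa1 u by simp
    show False by (rule npD[of u t1 v "a + 1"]) (use u t1 v b Fa1 in auto)
  qed
qed

lemma d_1c: "d = 1 \<Longrightarrow> s \<le> t \<Longrightarrow> t \<le> s + 1 \<Longrightarrow> F s - F t < 2 * h"
proof (rule ccontr)
  assume d: "d = 1" and st: "s \<le> t" "t \<le> s + 1" and "\<not> F s - F t < 2 * h"
  hence big: "F t \<le> F s - 2 * h" by simp
  have Fs1: "F (s + 1) = F s + 1" using per[of s] d by simp
  obtain u where u: "s \<le> u" "u \<le> t" "F u = F s - h" using ivt[of s t "F s - h"] st big h by auto
  obtain t1 where t1: "u \<le> t1" "t1 \<le> t" "F t1 = F s - 2 * h" using ivt[of u t "F s - 2 * h"] u big h by auto
  obtain v where v: "t \<le> v" "v \<le> s + 1" "F v = F s - h" using ivt[of t "s + 1" "F s - h"] st big h Fs1 by auto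
  have "F (s + 1) - F u - h = 1" using Fs1 u by simp
  show False by (rule npD[of u t1 v "s + 1"]) (use u t1 v Fs1 in auto)
qed

lemma d_m1c: "d = -1 \<Longrightarrow> s \<le> t \<Longrightarrow> t \<le> s + 1 \<Longrightarrow> F t - F s < 2 * h"
proof (rule ccontr)
  assume d: "d = -1" and st: "s \<le> t" "t \<le> s + 1" and "\<not> F t - F s < 2 * h"
  hence big: "F s + 2 * h \<le> F t" by simp
  have Fs1: "F (s + 1) = F s - 1" using per[of s] d by simp
  obtain u where u: "s \<le> u" "u \<le> t" "F u = F s + h" using ivt[of s t "F s + h"] st big h by auto
  obtain t1 where t1: "u \<le> t1" "t1 \<le> t" "F t1 = F s + 2 * h" using ivt[of u t "F s + 2 * h"] u big h by auto
  obtain v where v: "t \<le> v" "v \<le> s + 1" "F v = F s + h" using ivt[of t "s + 1" "F s + h"] st big h Fs1 by auto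
  have "F (s + 1) - F u + h = -1" using Fs1 u by simp
  show False by (rule npD[of u t1 v "s + 1"]) (use u t1 v Fs1 in auto)
qed

lemma d_1: "d = 1 \<Longrightarrow> s \<le> t \<Longrightarrow> F s - F t < 2 * h"
proof -
  assume d: "d = 1" and st: "s \<le> t"
  define n where "n = \<lfloor>t - s\<rfloor>"
  have n: "0 \<le> n" "s + of_int n \<le> t" "t \<le> s + of_int n + 1" unfolding n_def using st by linarith+
  have "F (s + of_int n) = F s + of_int n" using per_int[of F d s n] per d by simp
  hence "F s \<le> F (s + of_int n)" using n by simp
  moreover have "F (s + of_int n) - F t < 2 * h" by (rule d_1c[OF d n(2,3)])
  ultimately show ?thesis by linarith
qed

lemma d_m1: "d = -1 \<Longrightarrow> s \<le> t \<Longrightarrow> F t - F s < 2 * h"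
proof -
  assume d: "d = -1" and st: "s \<le> t"
  define n where "n = \<lfloor>t - s\<rfloor>"
  have n: "0 \<le> n" "s + of_int n \<le> t" "t \<le> s + of_int n + 1" unfolding n_def using st by linarith+
  have "F (s + of_int n) = F s - of_int n" using per_int[of F d s n] per d by simp
  hence "F (s + of_int n) \<le> F s" using n by simp
  moreover have "F t - F (s + of_int n) < 2 * h" by (rule d_m1c[OF d n(2,3)])
  ultimately show ?thesis by linarith
qed

lemma lift_result:
  "(d = 1 \<and> (\<forall>s t. s \<le> t \<longrightarrow> F s - F t < 2 * h)) \<or> (d = -1 \<and> (\<forall>s t. s \<le> t \<longrightarrow> F t - F s < 2 * h))"
proof -
  have "\<not> d \<ge> 2" "\<not> d \<le> -2" "d \<noteq> 0" using d_ge2 d_le2 d_0 by blast+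
  hence "d = 1 \<or> d = -1" by linarith
  thus ?thesis using d_1 d_m1 by blast
qed

end

lemma construct:
  fixes G :: "real \<Rightarrow> real"
  assumes cont: "continuous_on UNIV G" and per: "\<And>t. G (t + 1) = G t + 1"
    and bk: "\<And>s t. s \<le> t \<Longrightarrow> G s - G t < \<eta>" and etap: "\<eta> > 0"
  shows "\<exists>L H. continuous_on UNIV L \<and> continuous_on UNIV H \<and> (\<forall>u. L (H u) = u) \<and> (\<forall>u. H (L u) = u) \<and>
     (\<forall>u. L (u + 1) = L u + 1) \<and> (\<forall>u. H (u + 1) = H u + 1) \<and> (\<forall>u. \<bar>G (L u) - u\<bar> < 2 * \<eta>)"
proof -
  define M where "M t = Sup (G ` {..t})" for t
  have bdd: "bdd_above (G ` {..t})" for t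
  proof (unfold bdd_above_def, intro exI[of _ "G t + \<eta>"] ballI)
    fix y assume "y \<in> G ` {..t}"
    then obtain x where "x \<le> t" "y = G x" by auto
    thus "y \<le> G t + \<eta>" using bk[of x t] by simp
  qed
  have ne: "G ` {..t} \<noteq> {}" for t by auto
  have M1: "G x \<le> M t" if "x \<le> t" for x t
    unfolding M_def by (rule cSup_upper[OF _ bdd]) (use that in auto)
  have Mle: "M t \<le> y" if "\<And>x. x \<le> t \<Longrightarrow> G x \<le> y" for t y
    unfolding M_def by (rule cSup_least[OF ne]) (use that in auto)
  have M2: "M t \<le> G t + \<eta>" for t
  proof (rule Mle)
    fix x assume "x \<le> t" thus "G x \<le> G t + \<eta>" using bk[of x t] by simp
  qed
  have Mmono: "M s \<le> M t" if "s \<le> t" for s t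
    by (rule Mle) (use M1 that in auto)
  have Mper: "M (t + 1) = M t + 1" for t
  proof (rule antisym)
    show "M (t + 1) \<le> M t + 1"
    proof (rule Mle)
      fix x assume "x \<le> t + 1"
      hence "G (x - 1) \<le> M t" by (intro M1) simp
      moreover have "G x = G (x - 1) + 1" using per[of "x - 1"] by simp
      ultimately show "G x \<le> M t + 1" by simp
    qed
    have "M t \<le> M (t + 1) - 1"
    proof (rule Mle)
      fix x assume "x \<le> t"
      hence "G (x + 1) \<le> M (t + 1)" by (intro M1) simp
      thus "G x \<le> M (t + 1) - 1" using per[of x] by simp
    qed
    thus "M t + 1 \<le> M (t + 1)" by simp
  qed
  have Gc: "\<forall>x. \<forall>e>0. \<exists>d>0. \<forall>x'. dist x' x < d \<longrightarrow> dist (G x') (G x) < e"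
    using cont unfolding continuous_on_iff by simp
  have Mcont: "continuous_on UNIV M"
    unfolding continuous_on_iff
  proof (intro ballI allI impI)
    fix t e :: real assume "e > 0"
    hence "e/3 > 0" by simp
    from Gc[rule_format, OF this, of t]
    obtain d where d: "d > 0" "\<And>x'. dist x' t < d \<Longrightarrow> dist (G x') (G t) < e/3"
      by blast
    show "\<exists>d>0. \<forall>t'\<in>UNIV. dist t' t < d \<longrightarrow> dist (M t') (M t) < e"
    proof (intro exI[of _ d] conjI ballI impI)
      fix t' assume t': "dist t' t < d"
      show "dist (M t') (M t) < e"
      proof (cases "t \<le> t'")
        case True
        have "M t' \<le> M t + e/3"
        proof (rule Mle)
          fix x assume x: "x \<le> t'"
          show "G x \<le> M t + e/3"
          proof (cases "x \<le> t")
            case True thus ?thesis using M1[of x t] \<open>e>0\<close> by simp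
          next
            case False
            hence dxt: "dist x t < d" using x t' True by (simp add: dist_real_def)
            have "G x < G t + e/3" using d(2)[OF dxt, unfolded dist_real_def abs_less_iff] by linarith
            thus ?thesis using M1[of t t] by simp
          qed
        qed
        thus ?thesis using Mmono[OF True] \<open>e>0\<close> by (simp add: dist_real_def)
      next
        case False
        have "M t \<le> M t' + e/3 + e/3"
        proof (rule Mle)
          fix x assume x: "x \<le> t"
          show "G x \<le> M t' + e/3 + e/3"
          proof (cases "x \<le> t'")
            case True thus ?thesis using M1[of x t'] \<open>e>0\<close> by simp
          next
            case False
            hence dxt: "dist x t < d" using x t' \<open>\<not> t \<le> t'\<close> by (simp add: dist_real_def)
            have "G x < G t + e/3" using d(2)[OF dxt, unfolded dist_real_def abs_less_iff] by linarith
            moreover have "G t < G t' + e/3" using d(2)[OF t', unfolded dist_real_def abs_less_iff] by linarith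
            ultimately show ?thesis using M1[of t' t'] by simp
          qed
        qed
        moreover have "M t' \<le> M t" using Mmono False by simp
        ultimately show ?thesis using \<open>e>0\<close> by (simp add: dist_real_def)
      qed
    qed (use d(1) in simp)
  qed
  have Mint: "M (t + of_int n) = M t + of_int n" for t n using per_int[of M 1 t n] Mper by simp
  have cB: "continuous_on {0..1::real} (\<lambda>t. \<bar>t - M t\<bar>)"
    by (intro continuous_intros continuous_on_subset[OF Mcont]) auto
  obtain t0 where t0: "t0 \<in> {0..1}" "\<And>t. t \<in> {0..1} \<Longrightarrow> \<bar>t - M t\<bar> \<le> \<bar>t0 - M t0\<bar>"
    using continuous_attains_sup[OF compact_Icc _ cB] by auto
  define Bd where "Bd = \<bar>t0 - M t0\<bar>"
  have Bd: "\<bar>t - M t\<bar> \<le> Bd" for t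
  proof -
    have "t - of_int \<lfloor>t\<rfloor> \<in> {0..1}" by simp linarith
    hence "\<bar>(t - of_int \<lfloor>t\<rfloor>) - M (t - of_int \<lfloor>t\<rfloor>)\<bar> \<le> Bd" using t0(2) by (simp add: Bd_def)
    moreover have "M t = M (t - of_int \<lfloor>t\<rfloor>) + of_int \<lfloor>t\<rfloor>" using Mint[of "t - of_int \<lfloor>t\<rfloor>" "\<lfloor>t\<rfloor>"] by simp
    ultimately show ?thesis by simp
  qed
  have Bd0: "Bd \<ge> 0" unfolding Bd_def by simp
  define lm where "lm = min (1/2) (\<eta> / (2 * (Bd + 1)))"
  have lam: "0 < lm" "lm \<le> 1/2" "lm * Bd \<le> \<eta>/2"
  proof -
    show "0 < lm" using etap Bd0 by (auto simp: lm_def)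
    show "lm \<le> 1/2" unfolding lm_def by (rule min.cobounded1)
    have "lm * Bd \<le> (\<eta> / (2 * (Bd + 1))) * Bd" using Bd0 by (intro mult_right_mono) (auto simp: lm_def)
    also have "\<dots> = (\<eta>/2) * (Bd / (Bd + 1))" using Bd0 by (simp add: field_simps)
    also have "\<dots> \<le> (\<eta>/2) * 1" using Bd0 etap by (intro mult_left_mono) auto
    finally show "lm * Bd \<le> \<eta>/2" by simp
  qed
  define H where "H t = (1 - lm) * M t + lm * t" for t
  have Hcont: "continuous_on UNIV H" unfolding H_def by (intro continuous_intros Mcont)
  have Hmono: "H s < H t" if "s < t" for s t
  proof -
    have "(1 - lm) * M s \<le> (1 - lm) * M t" using Mmono[of s t] that lam by (intro mult_left_mono) auto
    moreover have "lm * s < lm * t" using that lam by simp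
    ultimately show ?thesis by (simp add: H_def)
  qed
  have Hinj: "inj H"
  proof (rule injI, rule ccontr)
    fix x y assume "H x = H y" "x \<noteq> y"
    thus False using Hmono[of x y] Hmono[of y x] by (cases "x < y") auto
  qed
  have Hper: "H (t + 1) = H t + 1" for t using Mper[of t] by (simp add: H_def algebra_simps)
  have Hint: "H (t + of_int n) = H t + of_int n" for t n using per_int[of H 1 t n] Hper by simp
  have HM: "\<bar>H t - M t\<bar> \<le> \<eta>/2" for t
  proof -
    have "H t - M t = lm * (t - M t)" by (simp add: H_def algebra_simps)
    hence "\<bar>H t - M t\<bar> = lm * \<bar>t - M t\<bar>" using lam by (simp add: abs_mult)
    also have "\<dots> \<le> lm * Bd" using Bd[of t] lam by (intro mult_left_mono) auto
    finally show ?thesis using lam by simp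
  qed
  have Hsurj: "surj H"
  proof -
    have "\<exists>t. H t = u" for u
    proof -
      define n where "n = \<lceil>u - H 0\<rceil>"
      have "H (of_int n) = H 0 + of_int n" "H (of_int n - 1) = H 0 + of_int n - 1"
        using Hint[of 0 n] Hint[of 0 "n - 1"] by simp_all
      moreover have "H 0 + of_int n - 1 < u" "u \<le> H 0 + of_int n" unfolding n_def by linarith+
      ultimately obtain t where "H t = u"
        using ivt_any[OF Hcont, of "of_int n - 1" "of_int n" u] by auto
      thus ?thesis by blast
    qed
    thus ?thesis by (metis surjI)
  qed
  define L where "L = inv H"
  have LH: "L (H u) = u" for u unfolding L_def using Hinj by simp
  have HL: "H (L u) = u" for u unfolding L_def using Hsurj by (simp add: surj_f_inv_f)
  have Lper: "L (u + 1) = L u + 1" for u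
  proof -
    have "H (L u + 1) = u + 1" using Hper HL by simp
    moreover have "L (H (L u + 1)) = L u + 1" by (rule LH)
    ultimately show ?thesis by simp
  qed
  have Lcont: "continuous_on UNIV L"
  proof (rule continuous_at_imp_continuous_on, intro ballI)
    fix u :: real
    have "isCont L (H (L u))"
      by (rule isCont_inverse_function[where f=H and g=L and x="L u" and d=1]) (use LH Hcont[unfolded continuous_on_eq_continuous_at[OF open_UNIV]] in auto)
    thus "isCont L u" using HL by simp
  qed
  have err: "\<bar>G (L u) - u\<bar> < 2 * \<eta>" for u
  proof -
    define x where "x = L u"
    have "u = H x" using HL by (simp add: x_def)
    moreover have "\<bar>G x - M x\<bar> \<le> \<eta>" using M1[of x x] M2[of x] by simp
    ultimately show ?thesis using HM[of x] etap unfolding x_def[symmetric] by linarith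
  qed
  show ?thesis
    by (rule exI[of _ L], rule exI[of _ H]) (use Lcont Hcont LH HL Lper Hper err in auto)
qed

lemma quotient_ee: "quotient_map (top_of_set {0..1}) (top_of_set circle1) ee"
proof (rule continuous_imp_quotient_map)
  show "continuous_map (top_of_set {0..1}) (top_of_set circle1) ee"
    by (simp add: continuous_ee)
  show "compact_space (top_of_set {0..1::real})"
    by (simp add: compact_space_subtopology)
  show "Hausdorff_space (top_of_set circle1)"
    by (simp add: Hausdorff_space_subtopology)
  show "ee ` topspace (top_of_set {0..1}) = topspace (top_of_set circle1)"
    using ee_image[of 0] by simp
qed

lemma circle_map:
  fixes A :: "real \<Rightarrow> real" and m :: int
  assumes contA: "continuous_on UNIV A" and perA: "\<And>u. A (u + 1) = A u + m"
  shows "\<exists>f. continuous_on circle1 f \<and> (\<forall>u. f (ee u) = ee (A u))"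
proof -
  define f where "f z = ee (A (SOME t. ee t = z))" for z
  have wd: "ee (A t) = ee (A t')" if "ee t = ee t'" for t t'
  proof -
    have "t - t' \<in> \<int>" using that by (simp add: ee_eq_iff)
    then obtain n where n: "t = t' + of_int n" by (metis Ints_cases add.commute diff_add_cancel)
    have "A t = A t' + of_int (n * m)" using per_int[of A m t' n] perA n by simp
    thus ?thesis by (simp add: ee_eq_iff)
  qed
  have fee: "f (ee u) = ee (A u)" for u
  proof -
    have "ee (SOME t. ee t = ee u) = ee u" by (rule someI[of _ u]) simp
    thus ?thesis unfolding f_def by (rule wd)
  qed
  have "continuous_on {0..1} (ee \<circ> A)"
    by (intro continuous_on_compose continuous_on_subset[OF contA] continuous_ee) auto
  hence "continuous_map (top_of_set {0..1}) euclidean (f \<circ> ee)"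
    by (simp add: o_def fee)
  hence "continuous_map (top_of_set circle1) euclidean f"
    by (rule continuous_compose_quotient_map[OF quotient_ee])
  thus ?thesis using fee by auto
qed

lemma circle_homeo:
  fixes L H :: "real \<Rightarrow> real" and sg :: int
  assumes "continuous_on UNIV L" "continuous_on UNIV H" "\<And>u. L (H u) = u" "\<And>u. H (L u) = u"
    "\<And>u. L (u + 1) = L u + 1" "\<And>u. H (u + 1) = H u + 1" and sg: "sg = 1 \<or> sg = -1"
  shows "\<exists>\<sigma> \<tau>. homeomorphism circle1 circle1 \<sigma> \<tau> \<and> (\<forall>u. \<sigma> (ee u) = ee (sg * L u))"
proof -
  have contA: "continuous_on UNIV (\<lambda>u. sg * L u)" by (intro continuous_intros assms(1))
  have perA: "sg * L (u + 1) = sg * L u + of_int sg" for u using assms(5)[of u] by (simp add: distrib_left)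
  obtain \<sigma> where \<sigma>: "continuous_on circle1 \<sigma>" "\<And>u. \<sigma> (ee u) = ee (sg * L u)"
    using circle_map[OF contA perA] by blast
  have contB: "continuous_on UNIV (\<lambda>u::real. H (of_int sg * u))"
    by (rule continuous_on_compose2[OF assms(2)]) (auto intro: continuous_intros)
  have perB: "H (of_int sg * (u + 1)) = H (of_int sg * u) + of_int sg" for u :: real
    using sg
  proof
    assume "sg = 1" thus ?thesis using assms(6) by simp
  next
    assume "sg = -1"
    have "H ((- u - 1) + 1) = H (- u - 1) + 1" by (rule assms(6))
    hence "H (- u) = H (- u - 1) + 1" by simp
    moreover have "- u - 1 = -1 - u" by simp
    ultimately show ?thesis using \<open>sg = -1\<close> by (simp add: algebra_simps)
  qed
  obtain \<tau> where \<tau>: "continuous_on circle1 \<tau>" "\<And>u. \<tau> (ee u) = ee (H (of_int sg * u))"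
    using circle_map[OF contB perB] by blast
  have sg2: "sg * sg = 1" using sg by auto
  have "homeomorphism circle1 circle1 \<sigma> \<tau>"
  proof (rule homeomorphismI)
    show "\<sigma> ` circle1 \<subseteq> circle1"
    proof
      fix w assume "w \<in> \<sigma> ` circle1"
      then obtain z where z: "z \<in> circle1" "w = \<sigma> z" by auto
      then obtain u where "z = ee u" using ee_image[of 0] by (metis imageE)
      thus "w \<in> circle1" using \<sigma>(2) z by simp
    qed
    show "\<tau> ` circle1 \<subseteq> circle1"
    proof
      fix w assume "w \<in> \<tau> ` circle1"
      then obtain z where z: "z \<in> circle1" "w = \<tau> z" by auto
      then obtain u where "z = ee u" using ee_image[of 0] by (metis imageE)
      thus "w \<in> circle1" using \<tau>(2) z by simp
    qed
    fix z assume "z \<in> circle1"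
    then obtain u where u: "z = ee u" using ee_image[of 0] by auto
    show "\<tau> (\<sigma> z) = z" using u \<sigma>(2) \<tau>(2) sg2 assms(4)
      by (simp add: mult.assoc[symmetric] of_int_mult[symmetric] del: of_int_mult)
  next
    fix z assume "z \<in> circle1"
    then obtain u where u: "z = ee u" using ee_image[of 0] by auto
    show "\<sigma> (\<tau> z) = z" using u \<sigma>(2) \<tau>(2) sg2 assms(3)
      by (simp add: mult.assoc[symmetric] of_int_mult[symmetric] del: of_int_mult)
  qed (use \<sigma>(1) \<tau>(1) in auto)
  thus ?thesis using \<sigma>(2) by blast
qed

context setting begin

lemma exists_phi:
  "\<exists>V \<phi>. open V \<and> J \<subseteq> V \<and> continuous_on V \<phi> \<and> (\<forall>w\<in>V. \<phi> w \<in> circle1) \<and> (\<forall>z\<in>circle1. \<phi> (c z) = z)"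
proof -
  obtain c' where hc: "homeomorphism circle1 J c c'"
    using homeomorphism_compact[OF compact_circle1 cont_c refl inj_c] by blast
  have cc': "continuous_on J c'" using homeomorphism_cont2[OF hc] .
  have c'J: "c' \<in> J \<rightarrow> circle1" using homeomorphism_image2[OF hc] by auto
  have clJ: "closedin (top_of_set UNIV) J" using compact_J by (simp add: compact_imp_closed)
  have ANRc: "ANR circle1" unfolding circle1_def by (rule ANR_sphere)
  obtain V \<phi> where V: "J \<subseteq> V" "openin (top_of_set UNIV) V" "continuous_on V \<phi>" "\<phi> \<in> V \<rightarrow> circle1"
      "\<And>x. x \<in> J \<Longrightarrow> \<phi> x = c' x"
    using ANR_imp_absolute_neighbourhood_extensor[OF ANRc cc' c'J clJ] by blast
  have "open V" using V(2) by simp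
  moreover have "\<forall>z\<in>circle1. \<phi> (c z) = z" using V(5) homeomorphism_apply1[OF hc] by auto
  ultimately show ?thesis using V by blast
qed

end

locale setting2 = setting +
  fixes V :: "(real^3) set" and \<phi> :: "real^3 \<Rightarrow> complex"
  assumes openV: "open V" and JV: "J \<subseteq> V" and contphi: "continuous_on V \<phi>"
    and phiS: "\<And>w. w \<in> V \<Longrightarrow> \<phi> w \<in> circle1" and phic: "\<And>z. z \<in> circle1 \<Longrightarrow> \<phi> (c z) = z"
begin

lemma J_ne: "J \<noteq> {}" by (simp add: circle1_def)

definition r0 where "r0 = (SOME r. r > 0 \<and> (\<forall>w. infdist w J \<le> r \<longrightarrow> w \<in> V))"

lemma r0: "r0 > 0" "\<And>w. infdist w J \<le> r0 \<Longrightarrow> w \<in> V"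
proof -
  obtain e where e: "e > 0" "(\<Union>x\<in>J. ball x e) \<subseteq> V"
    using compact_subset_open_imp_ball_epsilon_subset[OF compact_J openV JV] by blast
  have "e/2 > 0 \<and> (\<forall>w. infdist w J \<le> e/2 \<longrightarrow> w \<in> V)"
  proof (intro conjI allI impI)
    show "e/2 > 0" using e by simp
    fix w assume "infdist w J \<le> e/2"
    obtain j where "j \<in> J" "infdist w J = dist w j"
      using infdist_attains_inf[OF compact_imp_closed[OF compact_J] J_ne] by blast
    hence "w \<in> ball j e" using \<open>infdist w J \<le> e/2\<close> e(1) by (simp add: dist_commute)
    thus "w \<in> V" using e(2) \<open>j \<in> J\<close> by blast
  qed
  hence "r0 > 0 \<and> (\<forall>w. infdist w J \<le> r0 \<longrightarrow> w \<in> V)"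
    unfolding r0_def by (rule someI)
  thus "r0 > 0" "\<And>w. infdist w J \<le> r0 \<Longrightarrow> w \<in> V" by auto
qed

definition W where "W = riemann_sphere \<inter> {w. infdist w J \<le> r0}"

lemma W_V: "W \<subseteq> V" using r0 by (auto simp: W_def)

lemma compact_W: "compact W"
proof -
  have "closed {w. infdist w J \<le> r0}"
    by (rule closed_Collect_le) (auto intro: continuous_intros)
  thus ?thesis unfolding W_def by (intro compact_Int_closed) auto
qed

lemma inW: "w \<in> riemann_sphere \<Longrightarrow> z \<in> circle1 \<Longrightarrow> dist w (c z) \<le> r0 \<Longrightarrow> w \<in> W"
  unfolding W_def using infdist_le[of "c z" J w] by auto

lemma J_W: "z \<in> circle1 \<Longrightarrow> c z \<in> W"
  using inW[of "c z" z] c_RS r0 by auto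

lemma uc_phi: "\<And>e. e > 0 \<Longrightarrow> \<exists>d>0. \<forall>x\<in>W. \<forall>x'\<in>W. dist x' x < d \<longrightarrow> dist (\<phi> x') (\<phi> x) < e"
proof -
  have "uniformly_continuous_on W \<phi>"
    by (rule compact_uniformly_continuous[OF continuous_on_subset[OF contphi W_V] compact_W])
  thus "\<And>e. e > 0 \<Longrightarrow> \<exists>d>0. \<forall>x\<in>W. \<forall>x'\<in>W. dist x' x < d \<longrightarrow> dist (\<phi> x') (\<phi> x) < e"
    unfolding uniformly_continuous_on_def by blast
qed

lemma uc_c: "\<And>e. e > 0 \<Longrightarrow> \<exists>d>0. \<forall>x\<in>circle1. \<forall>x'\<in>circle1. dist x' x < d \<longrightarrow> dist (c x') (c x) < e"
proof -
  have "uniformly_continuous_on circle1 c"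
    by (rule compact_uniformly_continuous[OF cont_c compact_circle1])
  thus "\<And>e. e > 0 \<Longrightarrow> \<exists>d>0. \<forall>x\<in>circle1. \<forall>x'\<in>circle1. dist x' x < d \<longrightarrow> dist (c x') (c x) < e"
    unfolding uniformly_continuous_on_def by blast
qed

lemma approxA:
  assumes "e > 0"
  shows "\<exists>r>0. \<forall>w\<in>riemann_sphere. \<forall>z\<in>circle1. dist w (c z) < r \<longrightarrow> w \<in> W \<and> dist w (c (\<phi> w)) < e"
proof -
  have "e/2 > 0" using assms by simp
  obtain \<rho> where \<rho>: "\<rho> > 0" "\<And>x x'. x \<in> circle1 \<Longrightarrow> x' \<in> circle1 \<Longrightarrow> dist x' x < \<rho> \<Longrightarrow> dist (c x') (c x) < e/2"
    using uc_c[OF \<open>e/2>0\<close>] by blast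
  obtain r1 where r1: "r1 > 0" "\<And>x x'. x \<in> W \<Longrightarrow> x' \<in> W \<Longrightarrow> dist x' x < r1 \<Longrightarrow> dist (\<phi> x') (\<phi> x) < \<rho>"
    using uc_phi[OF \<rho>(1)] by blast
  define r where "r = min r0 (min r1 (e/2))"
  have r: "r > 0" "r \<le> r0" "r \<le> r1" "r \<le> e/2" using r0 r1 assms by (auto simp: r_def)
  show ?thesis
  proof (intro exI[of _ r] conjI ballI impI)
    show "r > 0" by (rule r(1))
    fix w z assume w: "w \<in> riemann_sphere" and z: "z \<in> circle1" and d: "dist w (c z) < r"
    show wW: "w \<in> W" using inW[OF w z] d r by simp
    have "dist (\<phi> w) (\<phi> (c z)) < \<rho>" using r1(2)[OF J_W[OF z] wW] d r by simp
    hence "dist (\<phi> w) z < \<rho>" using phic[OF z] by simp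
    moreover have "\<phi> w \<in> circle1" using phiS W_V wW by auto
    ultimately have "dist (c (\<phi> w)) (c z) < e/2" using \<rho>(2)[OF z] by blast
    moreover have "dist w (c (\<phi> w)) \<le> dist w (c z) + dist (c (\<phi> w)) (c z)" by (rule dist_triangle2)
    ultimately show "dist w (c (\<phi> w)) < e" using d r by linarith
  qed
qed

end

lemma half_not_int: "(x::real) \<in> \<int> \<Longrightarrow> x + 1/2 \<notin> \<int> \<and> x - 1/2 \<notin> \<int>"
proof -
  assume "x \<in> \<int>"
  then obtain n where n: "x = of_int n" by (auto elim: Ints_cases)
  have "x + 1/2 \<notin> \<int>"
  proof
    assume "x + 1/2 \<in> \<int>"
    then obtain m where "x + 1/2 = of_int m" by (auto elim: Ints_cases)
    hence "2 * of_int (m - n) = (1::real)" using n by (simp add: algebra_simps)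
    hence "2 * (m - n) = 1" by (metis of_int_1 of_int_eq_iff of_int_mult of_int_numeral)
    thus False by presburger
  qed
  moreover have "x - 1/2 \<notin> \<int>"
  proof
    assume "x - 1/2 \<in> \<int>"
    then obtain m where "x - 1/2 = of_int m" by (auto elim: Ints_cases)
    hence "2 * of_int (n - m) = (1::real)" using n by (simp add: algebra_simps)
    hence "2 * (n - m) = 1" by (metis of_int_1 of_int_eq_iff of_int_mult of_int_numeral)
    thus False by presburger
  qed
  ultimately show ?thesis by blast
qed

lemma int_const:
  fixes F :: "real \<Rightarrow> real"
  assumes cont: "continuous_on UNIV F" and I: "\<And>t. F (t + 1) - F t \<in> \<int>"
  shows "\<exists>d::int. \<forall>t. F (t + 1) = F t + d"
proof -
  define D where "D t = F (t + 1) - F t" for t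
  have contD: "continuous_on UNIV D" unfolding D_def
    by (intro continuous_intros continuous_on_compose2[OF cont]) auto
  have DI: "D t \<in> \<int>" for t using I by (simp add: D_def)
  have Dc: "D t = D 0" for t
  proof (rule ccontr)
    assume ne: "D t \<noteq> D 0"
    define a where "a = min 0 t"
    define b where "b = max 0 t"
    have ab: "a \<le> b" by (simp add: a_def b_def)
    have Dab: "{D a, D b} = {D 0, D t}" by (auto simp: a_def b_def min_def max_def)
    obtain n0 where n0: "D 0 = of_int n0" using DI[of 0] by (auto elim: Ints_cases)
    obtain nt where nt: "D t = of_int nt" using DI[of t] by (auto elim: Ints_cases)
    show False
    proof (cases "D 0 < D t")
      case True
      hence "n0 + 1 \<le> nt" using n0 nt by linarith
      hence "D 0 + 1/2 \<le> D t" using n0 nt by linarith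
      hence "min (D a) (D b) \<le> D 0 + 1/2" "D 0 + 1/2 \<le> max (D a) (D b)"
        using Dab True by (auto simp: min_def max_def doubleton_eq_iff)
      then obtain x where "D x = D 0 + 1/2" using ivt_any[OF contD ab] by blast
      thus False using DI[of x] half_not_int[OF DI[of 0]] by simp
    next
      case False
      hence "D t < D 0" using ne by simp
      hence "nt + 1 \<le> n0" using n0 nt by linarith
      hence "D t \<le> D 0 - 1/2" using n0 nt by linarith
      hence "min (D a) (D b) \<le> D 0 - 1/2" "D 0 - 1/2 \<le> max (D a) (D b)"
        using Dab \<open>D t < D 0\<close> by (auto simp: min_def max_def doubleton_eq_iff)
      then obtain x where "D x = D 0 - 1/2" using ivt_any[OF contD ab] by blast
      thus False using DI[of x] half_not_int[OF DI[of 0]] by simp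
    qed
  qed
  obtain d where "D 0 = of_int d" using DI[of 0] by (auto elim: Ints_cases)
  hence "F (t + 1) = F t + of_int d" for t using Dc[of t] by (simp add: D_def)
  thus ?thesis by blast
qed

lemma norm_ee_shift:
  assumes "a - b - h \<in> \<int> \<or> a - b + h \<in> \<int>"
  shows "norm (ee a - ee b) = norm (ee h - 1)"
proof -
  have eq: "norm (ee a - ee b) = norm (ee (a - b) - 1)"
  proof -
    have "ee a - ee b = ee b * (ee (a - b) - 1)" by (simp add: ee_diff right_diff_distrib)
    thus ?thesis by (simp add: norm_mult)
  qed
  from assms show ?thesis
  proof
    assume "a - b - h \<in> \<int>"
    hence "ee (a - b) = ee h" by (simp add: ee_eq_iff)
    thus ?thesis using eq by simp
  next
    assume "a - b + h \<in> \<int>"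
    hence "ee (a - b) = ee (- h)" by (simp add: ee_eq_iff)
    moreover have "ee (- h) = cnj (ee h)" by (simp add: ee_def cis_cnj)
    moreover have "norm (cnj (ee h) - 1) = norm (ee h - 1)"
      by (metis complex_cnj_diff complex_cnj_one complex_mod_cnj)
    ultimately show ?thesis using eq by simp
  qed
qed

lemma ee_far:
  assumes "y \<le> x" "x \<le> y + 1/4"
  shows "norm (ee x - ee (y + 5/8)) \<ge> 1"
proof -
  define \<delta> where "\<delta> = x - (y + 5/8)"
  have eq: "norm (ee x - ee (y + 5/8)) = norm (ee \<delta> - 1)"
  proof -
    have "ee x - ee (y + 5/8) = ee (y + 5/8) * (ee \<delta> - 1)" by (simp add: \<delta>_def ee_diff right_diff_distrib)
    thus ?thesis by (simp add: norm_mult)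
  qed
  have p1: "pi * y \<le> pi * x" using assms by (intro mult_left_mono) auto
  have p2: "pi * x \<le> pi * (y + 1/4)" using assms by (intro mult_left_mono) auto
  have p3: "2*pi*\<delta> = 2*(pi*x) - 2*(pi*y) - 5*pi/4" by (simp add: \<delta>_def algebra_simps)
  have p4: "pi * (y + 1/4) = pi * y + pi/4" by (simp add: algebra_simps)
  have "-(pi/2) \<le> 2*pi*\<delta> + pi" "2*pi*\<delta> + pi \<le> pi/2" using p1 p2 p3 p4 by linarith+
  hence "0 \<le> cos (2*pi*\<delta> + pi)" by (rule cos_ge_zero)
  hence "cos (2*pi*\<delta>) \<le> 0" by simp
  hence "1 \<le> \<bar>Re (ee \<delta> - 1)\<bar>" by (simp add: ee_def)
  also have "\<dots> \<le> norm (ee \<delta> - 1)" by (rule abs_Re_le_cmod)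
  finally show ?thesis using eq by simp
qed

context setting2 begin

lemma lift_exists:
  assumes contC: "continuous_on circle1 C" and CW: "\<And>z. z \<in> circle1 \<Longrightarrow> C z \<in> W"
  shows "\<exists>F. continuous_on UNIV F \<and> (\<forall>t. \<phi> (C (ee t)) = ee (F t))"
proof -
  define f where "f t = \<phi> (C (ee t))" for t
  have contf: "continuous_on UNIV f" unfolding f_def
  proof (rule continuous_on_compose2[OF continuous_on_subset[OF contphi W_V]])
    show "continuous_on UNIV (\<lambda>t. C (ee t))"
      by (rule continuous_on_compose2[OF contC continuous_ee]) auto
  qed (use CW in auto)
  have fS: "norm (f t) = 1" for t using phiS[OF W_V[THEN subsetD, OF CW[OF ee_in]]]
    by (simp add: f_def circle1_def)
  have fnz: "\<And>z. z \<in> UNIV \<Longrightarrow> f z \<noteq> 0" using fS by (metis norm_zero zero_neq_one)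
  obtain l where l: "continuous_on UNIV l" "\<And>t. f t = exp (l t)"
    using continuous_logarithm_on_simply_connected[OF contf convex_imp_simply_connected[OF convex_UNIV]
          locally_path_connected_UNIV fnz] by auto
  define F where "F t = Im (l t) / (2*pi)" for t
  have "continuous_on UNIV F" unfolding F_def by (intro continuous_intros l(1)) auto
  moreover have "f t = ee (F t)" for t
  proof -
    have "exp (Re (l t)) = 1" using fS[of t] l(2)[of t] by simp
    hence "f t = cis (Im (l t))" using l(2)[of t] by (simp add: exp_eq_polar)
    thus ?thesis by (simp add: F_def ee_def)
  qed
  ultimately show ?thesis unfolding f_def by blast
qed

end

context setting2 begin

lemma good_eventually:
  assumes nf: "\<not> has_collapsing_finger cs" and "\<epsilon> > 0"
  shows "eventually (\<lambda>k. \<exists>\<sigma> \<tau>. homeomorphism circle1 circle1 \<sigma> \<tau> \<and>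
            (\<forall>z\<in>circle1. dist (cs k (\<sigma> z)) (c z) < \<epsilon>)) sequentially"
proof -
  have e2: "\<epsilon>/2 > 0" using \<open>\<epsilon>>0\<close> by simp
  obtain \<rho>c where \<rho>c: "\<rho>c > 0" "\<And>x x'. x \<in> circle1 \<Longrightarrow> x' \<in> circle1 \<Longrightarrow> dist x' x < \<rho>c \<Longrightarrow> dist (c x') (c x) < \<epsilon>/2"
    using uc_c[OF e2] by blast
  define h where "h = min (1/8) (\<rho>c / (8*pi + 8))"
  have pos8: "8*pi + 8 > 0" using pi_gt_zero by linarith
  have "\<rho>c / (8*pi + 8) > 0" using \<rho>c(1) pos8 by simp
  hence h0: "0 < h" unfolding h_def by simp
  have "h \<le> 1/8" unfolding h_def by (rule min.cobounded1)
  note h = h0 this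
  have h3: "8*pi*h < \<rho>c"
  proof -
    have "h \<le> \<rho>c / (8*pi + 8)" by (simp add: h_def)
    hence "8*pi*h \<le> 8*pi*(\<rho>c / (8*pi + 8))" by (intro mult_left_mono) auto
    also have "\<dots> < \<rho>c" using \<rho>c(1) pos8 by (simp add: field_simps)
    finally show ?thesis .
  qed
  define \<kappa> where "\<kappa> = norm (ee h - 1)"
  have \<kappa>: "\<kappa> > 0"
  proof -
    have "h \<notin> \<int>"
    proof
      assume "h \<in> \<int>"
      then obtain m where "h = of_int m" by (auto elim: Ints_cases)
      thus False using h by auto
    qed
    hence "ee h \<noteq> 1" by (simp add: ee_eq_1_iff)
    thus ?thesis by (simp add: \<kappa>_def)
  qed
  obtain \<rho>\<phi> where \<rho>\<phi>: "\<rho>\<phi> > 0" "\<And>x x'. x \<in> W \<Longrightarrow> x' \<in> W \<Longrightarrow> dist x' x < \<rho>\<phi> \<Longrightarrow> dist (\<phi> x') (\<phi> x) < \<kappa>"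
    using uc_phi[OF \<kappa>] by blast
  have half: "(1/2::real) > 0" by simp
  obtain \<rho>2 where \<rho>2: "\<rho>2 > 0" "\<And>x x'. x \<in> W \<Longrightarrow> x' \<in> W \<Longrightarrow> dist x' x < \<rho>2 \<Longrightarrow> dist (\<phi> x') (\<phi> x) < 1/2"
    using uc_phi[OF half] by blast
  obtain \<delta>U where \<delta>U: "\<delta>U > 0" and ev1: "eventually (Good \<rho>\<phi> \<delta>U) sequentially"
    using unif_U[OF nf \<rho>\<phi>(1)] by blast
  define e' where "e' = min (\<delta>U/2) (\<epsilon>/2)"
  have e': "e' > 0" "e' \<le> \<delta>U/2" "e' \<le> \<epsilon>/2" using \<delta>U \<open>\<epsilon>>0\<close> by (auto simp: e'_def)
  obtain r where r: "r > 0" "\<And>w z. w \<in> riemann_sphere \<Longrightarrow> z \<in> circle1 \<Longrightarrow> dist w (c z) < r \<Longrightarrow>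
      w \<in> W \<and> dist w (c (\<phi> w)) < e'"
    using approxA[OF e'(1)] by blast
  define \<eta>2 where "\<eta>2 = min r0 \<rho>2"
  have \<eta>2: "\<eta>2 > 0" "\<eta>2 \<le> r0" "\<eta>2 \<le> \<rho>2" using r0 \<rho>2 by (auto simp: \<eta>2_def)
  show ?thesis
    using eventually_conj[OF ev1 eventually_conj[OF F3[OF r(1)] F2[OF \<eta>2(1)]]]
  proof (rule eventually_mono)
    fix k
    assume Hk: "Good \<rho>\<phi> \<delta>U k \<and> (\<forall>z\<in>circle1. \<exists>w\<in>circle1. dist (cs k z) (c w) < r) \<and>
                (\<forall>j\<in>J. \<exists>z\<in>circle1. dist (cs k z) j < \<eta>2)"
    define C where "C = cs k"
    have CW: "C z \<in> W \<and> dist (C z) (c (\<phi> (C z))) < e'" if zc: "z \<in> circle1" for z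
    proof -
      obtain w where "w \<in> circle1" "dist (C z) (c w) < r" using Hk zc by (auto simp: C_def)
      thus ?thesis using r(2)[of "C z" w] cs_RS[OF zc] by (simp add: C_def)
    qed
    have gS: "\<phi> (C z) \<in> circle1" if "z \<in> circle1" for z using phiS W_V CW[OF that] by auto
    obtain F where F: "continuous_on UNIV F" "\<And>t. \<phi> (C (ee t)) = ee (F t)"
      using lift_exists[of C] cont_cs CW by (auto simp: C_def)
    have I: "F (t + 1) - F t \<in> \<int>" for t
    proof -
      have "ee (F (t + 1)) = ee (F t)" using F(2)[of "t+1"] F(2)[of t] by simp
      thus ?thesis by (simp add: ee_eq_iff)
    qed
    obtain d :: int where d: "\<And>t. F (t + 1) = F t + d" using int_const[OF F(1) I] by blast
    have np: "nopat F h"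
      unfolding nopat_def
    proof (intro allI impI)
      fix u t1 v t2
      assume A: "u \<le> t1 \<and> t1 \<le> v \<and> v \<le> t2 \<and> t2 \<le> u + 1 \<and> F v - F u \<in> \<int> \<and>
        (F t1 - F u - h \<in> \<int> \<or> F t1 - F u + h \<in> \<int>) \<and> (F t2 - F u - h \<in> \<int> \<or> F t2 - F u + h \<in> \<int>)"
      have "ee (F v) = ee (F u)" using A by (simp add: ee_eq_iff)
      hence geq: "\<phi> (C (ee v)) = \<phi> (C (ee u))" using F(2) by simp
      have "dist (C (ee u)) (C (ee v)) \<le> dist (C (ee u)) (c (\<phi> (C (ee u)))) + dist (C (ee v)) (c (\<phi> (C (ee v))))"
        using geq dist_triangle2[of "C (ee u)" "C (ee v)" "c (\<phi> (C (ee u)))"] by simp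
      also have "\<dots> < e' + e'" using CW[OF ee_in, of u] CW[OF ee_in, of v] by (intro add_strict_mono) auto
      finally have close: "dist (C (ee u)) (C (ee v)) < \<delta>U" using e' by linarith
      have uv: "u \<le> v" "v \<le> u + 1" using A by auto
      have gd: "(\<forall>s\<in>{u..v}. dist (C (ee s)) (C (ee u)) < \<rho>\<phi>) \<or> (\<forall>s\<in>{v..u+1}. dist (C (ee s)) (C (ee u)) < \<rho>\<phi>)"
        using Hk uv close unfolding Good_def C_def by blast
      have contra: "False" if "dist (C (ee s)) (C (ee u)) < \<rho>\<phi>" "F s - F u - h \<in> \<int> \<or> F s - F u + h \<in> \<int>" for s
      proof -
        have "dist (\<phi> (C (ee s))) (\<phi> (C (ee u))) < \<kappa>"
          using \<rho>\<phi>(2)[of "C (ee u)" "C (ee s)"] CW[OF ee_in] that(1) by blast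
        hence "norm (ee (F s) - ee (F u)) < \<kappa>" using F(2) by (simp add: dist_norm)
        moreover have "norm (ee (F s) - ee (F u)) = \<kappa>" unfolding \<kappa>_def by (rule norm_ee_shift[OF that(2)])
        ultimately show False by simp
      qed
      from gd show False
      proof
        assume "\<forall>s\<in>{u..v}. dist (C (ee s)) (C (ee u)) < \<rho>\<phi>"
        thus False using contra[of t1] A by auto
      next
        assume "\<forall>s\<in>{v..u+1}. dist (C (ee s)) (C (ee u)) < \<rho>\<phi>"
        thus False using contra[of t2] A by auto
      qed
    qed
    have ns: "\<exists>t. \<not> (y \<le> F t \<and> F t \<le> y + 1/4)" for y
    proof -
      define z where "z = ee (y + 5/8)"
      have z: "z \<in> circle1" by (simp add: z_def)
      obtain w where w: "w \<in> circle1" "dist (C w) (c z) < \<eta>2" using Hk z by (auto simp: C_def)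
      have "dist (\<phi> (C w)) (\<phi> (c z)) < 1/2"
        using \<rho>2(2)[of "c z" "C w"] J_W[OF z] CW[OF w(1)] w(2) \<eta>2 by simp
      hence "dist (\<phi> (C w)) z < 1/2" using phic[OF z] by simp
      obtain t where "ee t = w" using ee_surj[OF w(1)] by blast
      hence "norm (ee (F t) - ee (y + 5/8)) < 1/2"
        using \<open>dist (\<phi> (C w)) z < 1/2\<close> F(2)[of t] by (simp add: z_def dist_norm)
      thus ?thesis using ee_far[of y "F t"] by (intro exI[of _ t]) auto
    qed
    interpret lc: liftctx F h d
      by unfold_locales (use F(1) d h np ns in auto)
    obtain sg :: int and G where sg: "sg = 1 \<or> sg = -1" and contG: "continuous_on UNIV G"
      and perG: "\<And>t. G (t + 1) = G t + 1" and bk: "\<And>s t. s \<le> t \<Longrightarrow> G s - G t < 2 * h"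
      and gG: "\<And>t. \<phi> (C (ee (of_int sg * t))) = ee (G t)"
    proof (cases "d = 1")
      case True
      hence bk1: "\<And>s t. s \<le> t \<Longrightarrow> F s - F t < 2 * h" using lc.lift_result by auto
      show ?thesis
        by (rule that[of 1 F]) (use F d True bk1 in auto)
    next
      case False
      hence dm: "d = -1" and bk1: "\<And>s t. s \<le> t \<Longrightarrow> F t - F s < 2 * h" using lc.lift_result by auto
      have contG: "continuous_on UNIV (\<lambda>t. F (- t))"
        by (rule continuous_on_compose2[OF F(1)]) (auto intro: continuous_intros)
      have perG: "F (- (t + 1)) = F (- t) + 1" for t
      proof -
        have "F ((- t - 1) + 1) = F (- t - 1) + d" by (rule d)
        thus ?thesis using dm by simp
      qed
      show ?thesis
        by (rule that[of "-1" "\<lambda>t. F (- t)"]) (use contG perG bk1 F(2) in auto)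
    qed
    have h2: "2 * h > 0" using h by simp
    obtain L H where LH: "continuous_on UNIV L" "continuous_on UNIV H" "\<And>u. L (H u) = u" "\<And>u. H (L u) = u"
      "\<And>u. L (u + 1) = L u + 1" "\<And>u. H (u + 1) = H u + 1" "\<And>u. \<bar>G (L u) - u\<bar> < 2 * (2 * h)"
      using construct[OF contG perG bk h2] by blast
    obtain \<sigma> \<tau> where hom: "homeomorphism circle1 circle1 \<sigma> \<tau>" and \<sigma>: "\<And>u. \<sigma> (ee u) = ee (of_int sg * L u)"
      using circle_homeo[OF LH(1-6) sg] by blast
    have "\<forall>z\<in>circle1. dist (C (\<sigma> z)) (c z) < \<epsilon>"
    proof
      fix z assume z: "z \<in> circle1"
      then obtain u where u: "z = ee u" using ee_surj by blast
      have sz: "\<sigma> z = ee (of_int sg * L u)" using \<sigma> u by simp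
      have d1: "dist (C (\<sigma> z)) (c (\<phi> (C (\<sigma> z)))) < \<epsilon>/2" using CW[of "\<sigma> z"] sz e' by simp
      have "\<phi> (C (\<sigma> z)) = ee (G (L u))" using sz gG by simp
      moreover have "dist (ee (G (L u))) (ee u) < \<rho>c"
      proof -
        have "dist (ee (G (L u))) (ee u) \<le> 2*pi*\<bar>G (L u) - u\<bar>" using norm_ee_minus_ee by (simp add: dist_norm)
        also have "\<dots> \<le> 2*pi*(2 * (2 * h))" using LH(7)[of u] by (intro mult_left_mono) auto
        also have "\<dots> = 8*pi*h" by simp
        finally show ?thesis using h3 by linarith
      qed
      ultimately have d2: "dist (c (\<phi> (C (\<sigma> z)))) (c z) < \<epsilon>/2"
        using \<rho>c(2)[of "ee u" "ee (G (L u))"] u by simp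
      have "dist (C (\<sigma> z)) (c z) \<le> dist (C (\<sigma> z)) (c (\<phi> (C (\<sigma> z)))) + dist (c (\<phi> (C (\<sigma> z)))) (c z)"
        by (rule dist_triangle)
      thus "dist (C (\<sigma> z)) (c z) < \<epsilon>" using d1 d2 by linarith
    qed
    thus "\<exists>\<sigma> \<tau>. homeomorphism circle1 circle1 \<sigma> \<tau> \<and> (\<forall>z\<in>circle1. dist (cs k (\<sigma> z)) (c z) < \<epsilon>)"
      using hom by (auto simp: C_def)
  qed
qed

end

theorem theorem10p6:
  fixes cs :: "nat \<Rightarrow> complex \<Rightarrow> real^3" and c :: "complex \<Rightarrow> real^3"
  assumes "\<And>k. simple_closed_curve (cs k)"
    and "simple_closed_curve c"
    and "limitin (fell_topology (top_of_set riemann_sphere))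
           (\<lambda>k. cs k ` circle1) (c ` circle1) sequentially"
    and "\<not> has_collapsing_finger cs"
  shows "\<exists>\<sigma> \<tau> :: nat \<Rightarrow> complex \<Rightarrow> complex.
           (\<forall>k. homeomorphism circle1 circle1 (\<sigma> k) (\<tau> k)) \<and>
           uniform_limit circle1 (\<lambda>k. cs k \<circ> \<sigma> k) c sequentially"
proof -
  interpret setting cs c using assms(1-3) by unfold_locales
  obtain V \<phi> where V: "open V" "c ` circle1 \<subseteq> V" "continuous_on V \<phi>" "\<forall>w\<in>V. \<phi> w \<in> circle1"
      "\<forall>z\<in>circle1. \<phi> (c z) = z"
    using exists_phi by blast
  interpret s2: setting2 cs c V \<phi> by unfold_locales (use V in auto)
  define Gd where "Gd k e \<longleftrightarrow> (\<exists>\<sigma> \<tau>. homeomorphism circle1 circle1 \<sigma> \<tau> \<and>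
            (\<forall>z\<in>circle1. dist (cs k (\<sigma> z)) (c z) < e))" for k e
  have ge: "eventually (\<lambda>k. Gd k e) sequentially" if "e > 0" for e
    unfolding Gd_def by (rule s2.good_eventually[OF assms(4) that])
  define S where "S k = {m. m \<le> k \<and> Gd k (inverse (real (Suc m)))}" for k
  have finS: "finite (S k)" for k unfolding S_def by simp
  have "\<forall>k. \<exists>p. homeomorphism circle1 circle1 (fst p) (snd p) \<and>
        (S k \<noteq> {} \<longrightarrow> (\<forall>z\<in>circle1. dist (cs k (fst p z)) (c z) < inverse (real (Suc (Max (S k))))))"
  proof
    fix k
    show "\<exists>p. homeomorphism circle1 circle1 (fst p) (snd p) \<and>
        (S k \<noteq> {} \<longrightarrow> (\<forall>z\<in>circle1. dist (cs k (fst p z)) (c z) < inverse (real (Suc (Max (S k))))))"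
    proof (cases "S k = {}")
      case True
      show ?thesis by (rule exI[of _ "(\<lambda>a. a, \<lambda>a. a)"]) (simp add: True homeomorphism_ident)
    next
      case False
      hence "Max (S k) \<in> S k" using finS Max_in by blast
      hence "Gd k (inverse (real (Suc (Max (S k)))))" by (simp add: S_def)
      then obtain \<sigma> \<tau> where "homeomorphism circle1 circle1 \<sigma> \<tau>"
          "\<forall>z\<in>circle1. dist (cs k (\<sigma> z)) (c z) < inverse (real (Suc (Max (S k))))"
        unfolding Gd_def by blast
      thus ?thesis by (intro exI[of _ "(\<sigma>, \<tau>)"]) simp
    qed
  qed
  then obtain P where P: "\<And>k. homeomorphism circle1 circle1 (fst (P k)) (snd (P k))"
     "\<And>k. S k \<noteq> {} \<Longrightarrow> (\<forall>z\<in>circle1. dist (cs k (fst (P k) z)) (c z) < inverse (real (Suc (Max (S k)))))"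
    by metis
  have 1: "\<forall>k. homeomorphism circle1 circle1 (fst (P k)) (snd (P k))" using P(1) by blast
  have 2: "uniform_limit circle1 (\<lambda>k. cs k \<circ> fst (P k)) c sequentially"
      unfolding uniform_limit_iff
    proof (intro allI impI)
      fix e :: real assume "e > 0"
      then obtain m where m: "inverse (real (Suc m)) < e" using reals_Archimedean by blast
      have "eventually (\<lambda>k. Gd k (inverse (real (Suc m))) \<and> m \<le> k) sequentially"
        using eventually_conj[OF ge[of "inverse (real (Suc m))"] eventually_ge_at_top[of m]] by simp
      thus "eventually (\<lambda>k. \<forall>x\<in>circle1. dist ((cs k \<circ> fst (P k)) x) (c x) < e) sequentially"
      proof (rule eventually_mono)
        fix k assume k: "Gd k (inverse (real (Suc m))) \<and> m \<le> k"
        hence mS: "m \<in> S k" by (simp add: S_def)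
        hence ne: "S k \<noteq> {}" by auto
        have "m \<le> Max (S k)" using Max_ge[OF finS mS] .
        hence "inverse (real (Suc (Max (S k)))) \<le> inverse (real (Suc m))" by (rule inverse_Suc_mono)
        hence lt: "inverse (real (Suc (Max (S k)))) < e" using m by linarith
        show "\<forall>x\<in>circle1. dist ((cs k \<circ> fst (P k)) x) (c x) < e"
        proof
          fix x assume "x \<in> circle1"
          hence "dist (cs k (fst (P k) x)) (c x) < inverse (real (Suc (Max (S k))))" using P(2)[OF ne] by blast
          thus "dist ((cs k \<circ> fst (P k)) x) (c x) < e" using lt by simp
        qed
      qed
    qed
  show ?thesis
    by (rule exI[of _ "\<lambda>k. fst (P k)"], rule exI[of _ "\<lambda>k. snd (P k)"]) (use 1 2 in simp)
qed

end
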